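(* Let $V$ be a finite set and $\mathcal{F}\subseteq 2^V$ a minimal hereditary family with $\delta(\mathcal{F})\ge 12$. Then: (1) for every $x\in V$, $u(x)\ge 5.3+\varepsilon(x)$; (2) $u(x)<5.3$ if and only if $x$ is mini-weight; (3) if $u(x)>5.3$, then $u(x)>5.3+\varepsilon(x)$; (4) if $u(x)=5.3$, then either $f_1(x)=5,f_2(x)=6,f_3(x)=0$, or $f_1(x)=4,f_2(x)=6,f_3(x)=1$.
   Context: Let $V$ be a finite set. A family $\mathcal{F}\subseteq 2^V$ is hereditary if $F'\subseteq F\in\mathcal{F}$ implies $F'\in\mathcal{F}$. For $x\in V$: the link is $\mathcal{F}(x)=\{F\setminus\{x\}: x\in F\in\mathcal{F}\}$, $d_{\mathcal{F}}(x)=|\mathcal{F}(x)|$, $\delta(\mathcal{F})=\min_{x\in V}d_{\mathcal{F}}(x)$. For $A\subseteq V$, $d_{\mathcal{F}}(A)=|\{F\in\mathcal{F}: A\subseteq F\}|$. A set $F\in\mathcal{F}$ is maximal if no other member strictly contains it; a hereditary $\mathcal{F}$ with $\delta(\mathcal{F})\ge 12$ is minimal if $\delta(\mathcal{F}\setminus\{F\})\le 11$ for every maximal $F\in\mathcal{F}$. $f_i(x)$ denotes the number of $i$-element sets in $\mathcal{F}(x)$. A vertex $x$ is mini-weight if $f_1(x)=4$, $f_2(x)=5$, $f_3(x)=2$. $\mathcal{Q}=\{Q\in\mathcal{F}:|Q|=4\}$ and $\mathcal{Q}(x)=\{Q\in\mathcal{Q}: x\in Q\}$. Weights: for $x\in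 F\in\mathcal{F}$ define $\omega(x,F)$ as follows. If $|F|\ne 3$, $\omega(x,F)=1/|F|$. If $|F|=3$: if $F$ is contained in some 4-element member of $\mathcal{F}$, every element of $F$ gets $\omega=1/3$; otherwise order the three 2-subsets of $F$ as $e_1,e_2,e_3$ with $d_{\mathcal{F}}(e_1)\le d_{\mathcal{F}}(e_2)\le d_{\mathcal{F}}(e_3)$; if $d_{\mathcal{F}}(e_2)\le 4<d_{\mathcal{F}}(e_3)$, the two elements of $e_3$ get $\omega=7/20$ and the element of $F\setminus e_3$ gets $6/20$; else if $d_{\mathcal{F}}(e_1)\le 4<d_{\mathcal{F}}(e_2)$, the two elements of $e_1$ get $7/20$ and the element of $F\setminus e_1$ gets $6/20$; otherwise every element of $F$ gets $1/3$. The weight of $x$ is $u(x)=\sum_{x\in F\in\mathcal{F}}\omega(x,F)$. Perturbation: for $Q\in\mathcal{Q}$ let $c(Q)$ be the number of mini-weight vertices in $Q$ (one has $c(Q)\le 3$). For $x\in Q\in\mathcal{Q}$ set $\varepsilon(x,Q)=-\frac{1}{15}$ if $x$ is mini-weight and $\varepsilon(x,Q)=\frac{c(Q)}{15(4-c(Q))}$ otherwise; and $\varepsilon(x)=\sum_{Q\in\mathcal{Q}(x)}\varepsilon(x,Q)$ (so $\varepsilon(x)=0$ if $\mathcal{Q}(x)=\emptyset$). *)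

theory Defs
  imports Complex_Main
begin

definition hereditary :: "'a set set \<Rightarrow> bool" where
  "hereditary \<F> \<longleftrightarrow> (\<forall>F F'. F \<in> \<F> \<and> F' \<subseteq> F \<longrightarrow> F' \<in> \<F>)"

definition link :: "'a set set \<Rightarrow> 'a \<Rightarrow> 'a set set" where
  "link \<F> x = {F - {x} | F. F \<in> \<F> \<and> x \<in> F}"

definition deg :: "'a set set \<Rightarrow> 'a \<Rightarrow> nat" where
  "deg \<F> x = card (link \<F> x)"

definition min_deg :: "'a set \<Rightarrow> 'a set set \<Rightarrow> nat" where
  "min_deg V \<F> = Min (deg \<F> ` V)"

definition set_deg :: "'a set set \<Rightarrow> 'a set \<Rightarrow> nat" where
  "set_deg \<F> A = card {F \<in> \<F>. A \<subseteq> F}"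

definition maximal_in :: "'a set set \<Rightarrow> 'a set \<Rightarrow> bool" where
  "maximal_in \<F> F \<longleftrightarrow> F \<in> \<F> \<and> \<not> (\<exists>G \<in> \<F>. F \<subset> G)"

definition minimal_family :: "'a set \<Rightarrow> 'a set set \<Rightarrow> bool" where
  "minimal_family V \<F> \<longleftrightarrow> hereditary \<F> \<and> min_deg V \<F> \<ge> 12 \<and>
     (\<forall>F. maximal_in \<F> F \<longrightarrow> min_deg V (\<F> - {F}) \<le> 11)"

definition f_i :: "'a set set \<Rightarrow> nat \<Rightarrow> 'a \<Rightarrow> nat" where
  "f_i \<F> i x = card {G \<in> link \<F> x. card G = i}"

definition mini_weight :: "'a set set \<Rightarrow> 'a \<Rightarrow> bool" where
  "mini_weight \<F> x \<longleftrightarrow> f_i \<F> 1 x = 4 \<and> f_i \<F> 2 x = 5 \<and> f_i \<F> 3 x = 2"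

definition ordered_pairs :: "'a set set \<Rightarrow> 'a set \<Rightarrow> 'a set \<Rightarrow> 'a set \<Rightarrow> 'a set \<Rightarrow> bool" where
  "ordered_pairs \<F> F e1 e2 e3 \<longleftrightarrow>
     e1 \<noteq> e2 \<and> e1 \<noteq> e3 \<and> e2 \<noteq> e3 \<and>
     e1 \<subseteq> F \<and> e2 \<subseteq> F \<and> e3 \<subseteq> F \<and> card e1 = 2 \<and> card e2 = 2 \<and> card e3 = 2 \<and>
     set_deg \<F> e1 \<le> set_deg \<F> e2 \<and> set_deg \<F> e2 \<le> set_deg \<F> e3"

definition omega :: "'a set set \<Rightarrow> 'a \<Rightarrow> 'a set \<Rightarrow> real" where
  "omega \<F> x F =
    (if card F \<noteq> 3 then 1 / real (card F)
     else if (\<exists>Q \<in> \<F>. card Q = 4 \<and> F \<subseteq> Q) then 1/3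
     else if (\<exists>e1 e2 e3. ordered_pairs \<F> F e1 e2 e3 \<and> set_deg \<F> e2 \<le> 4 \<and> 4 < set_deg \<F> e3)
       then (if (\<exists>e1 e2 e3. ordered_pairs \<F> F e1 e2 e3 \<and> set_deg \<F> e2 \<le> 4 \<and> 4 < set_deg \<F> e3
                 \<and> x \<in> e3) then 7/20 else 6/20)
     else if (\<exists>e1 e2 e3. ordered_pairs \<F> F e1 e2 e3 \<and> set_deg \<F> e1 \<le> 4 \<and> 4 < set_deg \<F> e2)
       then (if (\<exists>e1 e2 e3. ordered_pairs \<F> F e1 e2 e3 \<and> set_deg \<F> e1 \<le> 4 \<and> 4 < set_deg \<F> e2
                 \<and> x \<in> e1) then 7/20 else 6/20)
     else 1/3)"

definition weight :: "'a set set \<Rightarrow> 'a \<Rightarrow> real" where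
  "weight \<F> x = (\<Sum>F \<in> {F \<in> \<F>. x \<in> F}. omega \<F> x F)"

definition cQ :: "'a set set \<Rightarrow> 'a set \<Rightarrow> nat" where
  "cQ \<F> Q = card {y \<in> Q. mini_weight \<F> y}"

definition eps_Q :: "'a set set \<Rightarrow> 'a \<Rightarrow> 'a set \<Rightarrow> real" where
  "eps_Q \<F> x Q = (if mini_weight \<F> x then - 1/15
                  else real (cQ \<F> Q) / (15 * (4 - real (cQ \<F> Q))))"

definition eps :: "'a set set \<Rightarrow> 'a \<Rightarrow> real" where
  "eps \<F> x = (\<Sum>Q \<in> {Q \<in> \<F>. card Q = 4 \<and> x \<in> Q}. eps_Q \<F> x Q)"

end

theory Submission
  imports Defs
begin

definition Sk :: "'a set set \<Rightarrow> 'a \<Rightarrow> nat \<Rightarrow> 'a set set" where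
  "Sk FF x k = {F\<in>FF. x\<in>F \<and> card F = k}"
definition Sbig :: "'a set set \<Rightarrow> 'a \<Rightarrow> 'a set set" where
  "Sbig FF x = {F\<in>FF. x\<in>F \<and> 5 \<le> card F}"
definition TT :: "'a \<Rightarrow> 'a set \<Rightarrow> 'a set set" where
  "TT x Q = {G. G \<subseteq> Q \<and> x \<in> G \<and> card G = 3}"
definition Nb :: "'a set set \<Rightarrow> 'a \<Rightarrow> 'a set" where
  "Nb FF x = {y. y \<noteq> x \<and> {x,y} \<in> FF}"

lemma TT_eq:
  assumes "finite Q" "card Q = 4" "x \<in> Q"
  shows "TT x Q = (\<lambda>y. Q - {y}) ` (Q - {x})" and "card (TT x Q) = 3"
proof -
  show e: "TT x Q = (\<lambda>y. Q - {y}) ` (Q - {x})"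
  proof
    show "TT x Q \<subseteq> (\<lambda>y. Q - {y}) ` (Q - {x})"
    proof
      fix G assume "G \<in> TT x Q"
      hence G: "G \<subseteq> Q" "x \<in> G" "card G = 3" by (auto simp: TT_def)
      have "card (Q - G) = 1" using G assms by (simp add: card_Diff_subset finite_subset)
      then obtain y where y: "Q - G = {y}" by (auto simp: card_Suc_eq)
      have "G = Q - {y}" using y G by blast
      moreover have "y \<in> Q - {x}" using y G by blast
      ultimately show "G \<in> (\<lambda>y. Q - {y}) ` (Q - {x})" by blast
    qed
    show "(\<lambda>y. Q - {y}) ` (Q - {x}) \<subseteq> TT x Q"
      using assms by (auto simp: TT_def)
  qed
  have "inj_on (\<lambda>y. Q - {y}) (Q - {x})" by (auto simp: inj_on_def)
  hence "card (TT x Q) = card (Q - {x})" using e card_image by metis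
  thus "card (TT x Q) = 3" using assms by simp
qed

lemma TT_inter:
  assumes "finite Q1" "card Q1 = 4" "finite Q2" "card Q2 = 4" "Q1 \<noteq> Q2"
  shows "card (TT x Q1 \<inter> TT x Q2) \<le> 1"
proof -
  have fin: "finite (TT x Q1)" by (rule finite_subset[of _ "Pow Q1"]) (auto simp: TT_def assms)
  have "\<forall>a1\<in>TT x Q1 \<inter> TT x Q2. \<forall>a2\<in>TT x Q1 \<inter> TT x Q2. a1 = a2"
  proof (intro ballI, rule ccontr)
    fix G1 G2 assume G: "G1 \<in> TT x Q1 \<inter> TT x Q2" "G2 \<in> TT x Q1 \<inter> TT x Q2" "G1 \<noteq> G2"
    hence c: "card G1 = 3" "card G2 = 3" "G1 \<subseteq> Q1" "G2 \<subseteq> Q1" "G1 \<subseteq> Q2" "G2 \<subseteq> Q2"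
      by (auto simp: TT_def)
    have f: "finite G1" "finite G2" using c card.infinite by fastforce+
    have "card (G1 \<union> G2) \<ge> 4"
    proof (rule ccontr)
      assume "\<not> 4 \<le> card (G1 \<union> G2)"
      moreover have "card G1 \<le> card (G1 \<union> G2)" "card G2 \<le> card (G1 \<union> G2)"
        using f by (simp_all add: card_mono)
      ultimately have "card (G1 \<union> G2) = card G1" "card (G1 \<union> G2) = card G2" using c by auto
      hence "G1 = G1 \<union> G2" "G2 = G1 \<union> G2" using f
        by (simp_all add: card_subset_eq)
      thus False using G by auto
    qed
    have "G1 \<union> G2 = Q1"
    proof (rule card_subset_eq)
      show s: "G1 \<union> G2 \<subseteq> Q1" using c by auto
      show "card (G1 \<union> G2) = card Q1" using card_mono[OF assms(1) s] assms \<open>card (G1 \<union> G2) \<ge> 4\<close> by linarith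
    qed (use assms in auto)
    moreover have "G1 \<union> G2 = Q2"
    proof (rule card_subset_eq)
      show s: "G1 \<union> G2 \<subseteq> Q2" using c by auto
      show "card (G1 \<union> G2) = card Q2" using card_mono[OF assms(3) s] assms \<open>card (G1 \<union> G2) \<ge> 4\<close> by linarith
    qed (use assms in auto)
    ultimately show False using assms by simp
  qed
  thus ?thesis using fin by (simp add: card_le_Suc0_iff_eq)
qed

lemma sub_card:
  assumes "finite F" "A \<subseteq> F" "card A \<le> k" "k \<le> card F"
  obtains G where "A \<subseteq> G" "G \<subseteq> F" "card G = k"
proof -
  have "k - card A \<le> card (F - A)" using assms by (simp add: card_Diff_subset finite_subset)
  then obtain B where B: "B \<subseteq> F - A" "card B = k - card A" "finite B"
    by (rule obtain_subset_with_card_n)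
  have fa: "finite A" using assms finite_subset by blast
  have "card (A \<union> B) = card A + card B" using B fa by (subst card_Un_disjoint) auto
  hence "card (A \<union> B) = k" using B assms by simp
  thus ?thesis using that[of "A \<union> B"] B assms by blast
qed

context
  fixes V :: "'a set" and FF :: "'a set set"
  assumes finV: "finite V" and subV: "FF \<subseteq> Pow V" and her: "hereditary FF"
begin

lemma finF: "F \<in> FF \<Longrightarrow> finite F"
  using subV finV finite_subset by blast

lemma finFF: "finite FF"
  using subV finV by (meson finite_Pow_iff finite_subset)

lemma herI: "F \<in> FF \<Longrightarrow> G \<subseteq> F \<Longrightarrow> G \<in> FF"
  using her unfolding hereditary_def by blast

lemma fin_Sk: "finite (Sk FF x k)"
  using finFF by (simp add: Sk_def)

lemma fin_Sbig: "finite (Sbig FF x)"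
  using finFF by (simp add: Sbig_def)

lemma f_i_eq: "f_i FF i x = card (Sk FF x (Suc i))"
proof -
  have inj: "inj_on (\<lambda>F. F - {x}) {F\<in>FF. x\<in>F}"
    by (auto simp: inj_on_def)
  have e: "{G \<in> link FF x. card G = i} = (\<lambda>F. F - {x}) ` Sk FF x (Suc i)"
  proof
    show "{G \<in> link FF x. card G = i} \<subseteq> (\<lambda>F. F - {x}) ` Sk FF x (Suc i)"
    proof
      fix G assume "G \<in> {G \<in> link FF x. card G = i}"
      then obtain F where F: "F \<in> FF" "x \<in> F" "G = F - {x}" "card G = i"
        by (auto simp: link_def)
      have "card F = Suc i" using F finF[OF F(1)]
        by (metis card_Diff_singleton_if card.infinite diff_Suc_1 card_Suc_Diff1)
      thus "G \<in> (\<lambda>F. F - {x}) ` Sk FF x (Suc i)" using F by (auto simp: Sk_def)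
    qed
    show "(\<lambda>F. F - {x}) ` Sk FF x (Suc i) \<subseteq> {G \<in> link FF x. card G = i}"
      using finF by (auto simp: Sk_def link_def)
  qed
  have "inj_on (\<lambda>F. F - {x}) (Sk FF x (Suc i))"
    using inj by (rule inj_on_subset) (auto simp: Sk_def)
  thus ?thesis unfolding f_i_def e by (simp add: card_image)
qed

lemma deg_eq: "deg FF x = card {F\<in>FF. x\<in>F}"
proof -
  have inj: "inj_on (\<lambda>F. F - {x}) {F\<in>FF. x\<in>F}"
    by (auto simp: inj_on_def)
  have "link FF x = (\<lambda>F. F - {x}) ` {F\<in>FF. x\<in>F}" by (auto simp: link_def)
  thus ?thesis using inj by (simp add: deg_def card_image)
qed

lemma A_decomp:
  assumes "{x} \<in> FF"
  shows "{F\<in>FF. x\<in>F} = {{x}} \<union> Sk FF x 2 \<union> Sk FF x 3 \<union> Sk FF x 4 \<union> Sbig FF x"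
proof
  show "{F\<in>FF. x\<in>F} \<subseteq> {{x}} \<union> Sk FF x 2 \<union> Sk FF x 3 \<union> Sk FF x 4 \<union> Sbig FF x"
  proof
    fix F assume F: "F \<in> {F\<in>FF. x\<in>F}"
    hence fF: "finite F" using finF by auto
    have "card F \<noteq> 0" using F fF by auto
    moreover have "card F = 1 \<Longrightarrow> F = {x}" using F by (auto simp: card_Suc_eq)
    ultimately show "F \<in> {{x}} \<union> Sk FF x 2 \<union> Sk FF x 3 \<union> Sk FF x 4 \<union> Sbig FF x"
      using F by (auto simp: Sk_def Sbig_def)
  qed
next
  show "{{x}} \<union> Sk FF x 2 \<union> Sk FF x 3 \<union> Sk FF x 4 \<union> Sbig FF x \<subseteq> {F\<in>FF. x\<in>F}"
    using assms by (auto simp: Sk_def Sbig_def)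
qed

lemma single_in: "F \<in> FF \<Longrightarrow> x \<in> F \<Longrightarrow> {x} \<in> FF"
  using herI by blast

lemma TT_sub: "Q \<in> Sk FF x 4 \<Longrightarrow> TT x Q \<subseteq> Sk FF x 3"
  by (auto simp: TT_def Sk_def intro: herI)

lemma TT_card: "Q \<in> Sk FF x 4 \<Longrightarrow> card (TT x Q) = 3"
  using TT_eq(2)[of Q x] finF by (auto simp: Sk_def)

lemma finTT: "Q \<in> FF \<Longrightarrow> finite (TT x Q)"
  by (rule finite_subset[of _ "Pow Q"]) (auto simp: TT_def finF)

lemma two_Q:
  assumes "Q1 \<in> Sk FF x 4" "Q2 \<in> Sk FF x 4" "Q1 \<noteq> Q2"
  shows "card (TT x Q1 \<union> TT x Q2) \<ge> 5"
proof -
  have f: "finite (TT x Q1)" "finite (TT x Q2)" using assms finTT by (auto simp: Sk_def)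
  have "card (TT x Q1 \<inter> TT x Q2) \<le> 1"
    using TT_inter[of Q1 Q2 x] assms finF by (auto simp: Sk_def)
  moreover have "card (TT x Q1) + card (TT x Q2) = card (TT x Q1 \<union> TT x Q2) + card (TT x Q1 \<inter> TT x Q2)"
    using card_Un_Int[OF f] .
  ultimately show ?thesis using TT_card assms by simp
qed

lemma three_Q:
  assumes "Q1 \<in> Sk FF x 4" "Q2 \<in> Sk FF x 4" "Q3 \<in> Sk FF x 4"
    "Q1 \<noteq> Q2" "Q1 \<noteq> Q3" "Q2 \<noteq> Q3"
  shows "card (Sk FF x 3) \<ge> 6"
proof -
  have f: "finite (TT x Q1)" "finite (TT x Q2)" "finite (TT x Q3)" using assms finTT by (auto simp: Sk_def)
  have i13: "card (TT x Q1 \<inter> TT x Q3) \<le> 1"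
    using TT_inter[of Q1 Q3 x] assms finF by (auto simp: Sk_def)
  have i23: "card (TT x Q2 \<inter> TT x Q3) \<le> 1"
    using TT_inter[of Q2 Q3 x] assms finF by (auto simp: Sk_def)
  have u12: "card (TT x Q1 \<union> TT x Q2) \<ge> 5" using two_Q assms by blast
  have "card ((TT x Q1 \<union> TT x Q2) \<inter> TT x Q3) \<le> card (TT x Q1 \<inter> TT x Q3) + card (TT x Q2 \<inter> TT x Q3)"
    by (metis Int_Un_distrib2 card_Un_le)
  hence i: "card ((TT x Q1 \<union> TT x Q2) \<inter> TT x Q3) \<le> 2" using i13 i23 by linarith
  have "card (TT x Q1 \<union> TT x Q2) + card (TT x Q3) = card ((TT x Q1 \<union> TT x Q2) \<union> TT x Q3) + card ((TT x Q1 \<union> TT x Q2) \<inter> TT x Q3)"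
    using card_Un_Int[of "TT x Q1 \<union> TT x Q2" "TT x Q3"] f by simp
  hence "card (TT x Q1 \<union> TT x Q2 \<union> TT x Q3) \<ge> 6" using i u12 TT_card[OF assms(3)] by linarith
  moreover have "TT x Q1 \<union> TT x Q2 \<union> TT x Q3 \<subseteq> Sk FF x 3" using TT_sub assms by blast
  ultimately show ?thesis using card_mono[OF fin_Sk, of "TT x Q1 \<union> TT x Q2 \<union> TT x Q3" x 3] by linarith
qed

lemma big_Q:
  assumes "Sbig FF x \<noteq> {}"
  shows "card (Sk FF x 4) \<ge> 4"
proof -
  obtain F where F: "F \<in> FF" "x \<in> F" "5 \<le> card F" using assms by (auto simp: Sbig_def)
  obtain G where G: "{x} \<subseteq> G" "G \<subseteq> F" "card G = 5"
    using sub_card[of F "{x}" 5] F finF by auto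
  have fG: "finite G" using G finF[OF F(1)] finite_subset by blast
  have "(\<lambda>y. G - {y}) ` (G - {x}) \<subseteq> Sk FF x 4"
  proof
    fix H assume "H \<in> (\<lambda>y. G - {y}) ` (G - {x})"
    then obtain y where y: "y \<in> G" "y \<noteq> x" "H = G - {y}" by auto
    have "H \<subseteq> F" using y G by blast
    hence "H \<in> FF" using herI[OF F(1)] by blast
    moreover have "card H = 4" using y G fG by simp
    ultimately show "H \<in> Sk FF x 4" using y G by (auto simp: Sk_def)
  qed
  moreover have "card ((\<lambda>y. G - {y}) ` (G - {x})) = 4"
  proof -
    have "inj_on (\<lambda>y. G - {y}) (G - {x})" by (auto simp: inj_on_def)
    thus ?thesis using G fG by (simp add: card_image)
  qed
  ultimately show ?thesis using card_mono[OF fin_Sk, of "(\<lambda>y. G - {y}) ` (G - {x})" x 4] by linarith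
qed

lemma Nb_card: "card (Nb FF x) = card (Sk FF x 2)"
proof -
  have "Sk FF x 2 = (\<lambda>y. {x,y}) ` Nb FF x"
  proof
    show "Sk FF x 2 \<subseteq> (\<lambda>y. {x,y}) ` Nb FF x"
    proof
      fix F assume "F \<in> Sk FF x 2"
      hence F: "F \<in> FF" "x \<in> F" "card F = 2" by (auto simp: Sk_def)
      then obtain a b where ab: "F = {a,b}" "a \<noteq> b" unfolding card_2_iff by blast
      show "F \<in> (\<lambda>y. {x,y}) ` Nb FF x"
      proof (cases "a = x")
        case True
        hence "b \<in> Nb FF x" using ab F by (auto simp: Nb_def)
        thus ?thesis using ab True by blast
      next
        case False
        hence "b = x" using F ab by auto
        hence e: "F = {x,a}" using ab by auto
        hence "a \<in> Nb FF x" using F False by (auto simp: Nb_def)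
        thus ?thesis using e by blast
      qed
    qed
    show "(\<lambda>y. {x,y}) ` Nb FF x \<subseteq> Sk FF x 2" by (auto simp: Nb_def Sk_def)
  qed
  moreover have "inj_on (\<lambda>y. {x,y}) (Nb FF x)" by (auto simp: inj_on_def Nb_def doubleton_eq_iff)
  ultimately show ?thesis by (simp add: card_image)
qed

lemma fin_Nb: "finite (Nb FF x)"
proof -
  have "Nb FF x \<subseteq> V" using subV by (auto simp: Nb_def)
  thus ?thesis using finV finite_subset by blast
qed

lemma in_Nb: "F \<in> FF \<Longrightarrow> x \<in> F \<Longrightarrow> F - {x} \<subseteq> Nb FF x"
  by (auto simp: Nb_def intro: herI)

lemma S3_bound:
  assumes "finite B"
  shows "card {F \<in> Sk FF x 3. F - {x} \<subseteq> B} \<le> card B choose 2"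
proof -
  have inj: "inj_on (\<lambda>F. F - {x}) {F \<in> Sk FF x 3. F - {x} \<subseteq> B}"
    by (auto simp: inj_on_def Sk_def)
  have "(\<lambda>F. F - {x}) ` {F \<in> Sk FF x 3. F - {x} \<subseteq> B} \<subseteq> {P. P \<subseteq> B \<and> card P = 2}"
    using finF by (auto simp: Sk_def)
  hence "card {F \<in> Sk FF x 3. F - {x} \<subseteq> B} \<le> card {P. P \<subseteq> B \<and> card P = 2}"
    using card_inj_on_le[OF inj] assms by (simp add: finite_subset)
  thus ?thesis using n_subsets[OF assms] by simp
qed


lemma W_ne3: "card F \<noteq> 3 \<Longrightarrow> omega FF x F = 1 / real (card F)"
  by (simp add: omega_def)

lemma W_cov: "card F = 3 \<Longrightarrow> Q \<in> FF \<Longrightarrow> card Q = 4 \<Longrightarrow> F \<subseteq> Q \<Longrightarrow> omega FF x F = 1/3"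
  unfolding omega_def by auto

lemma W_ge: "card F = 3 \<Longrightarrow> omega FF x F \<ge> 3/10"
  unfolding omega_def by auto

lemma pairs3:
  assumes "e \<subseteq> {x,z,w}" "card e = 2"
  shows "e = {x,z} \<or> e = {x,w} \<or> e = {z,w}"
proof -
  obtain a b where ab: "e = {a,b}" "a \<noteq> b" using assms(2) unfolding card_2_iff by blast
  thus ?thesis using assms(1) by auto
qed

lemma W_mixed:
  assumes "x \<noteq> z" "x \<noteq> w" "z \<noteq> w"
    and nc: "\<not> (\<exists>Q\<in>FF. card Q = 4 \<and> {x,z,w} \<subseteq> Q)"
    and dz: "set_deg FF {x,z} > 4" and dw: "set_deg FF {x,w} \<le> 4"
  shows "omega FF x {x,z,w} = 7/20"
proof -
  have c3: "card {x,z,w} = 3" using assms by simp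
  have pe: "ordered_pairs FF {x,z,w} e1 e2 e3 \<Longrightarrow>
      (e1 = {x,z} \<or> e1 = {x,w} \<or> e1 = {z,w}) \<and> (e2 = {x,z} \<or> e2 = {x,w} \<or> e2 = {z,w})
      \<and> (e3 = {x,z} \<or> e3 = {x,w} \<or> e3 = {z,w})" for e1 e2 e3
  proof -
    assume "ordered_pairs FF {x,z,w} e1 e2 e3"
    hence "e1 \<subseteq> {x,z,w}" "card e1 = 2" "e2 \<subseteq> {x,z,w}" "card e2 = 2" "e3 \<subseteq> {x,z,w}" "card e3 = 2"
      unfolding ordered_pairs_def by auto
    thus ?thesis using pairs3 by metis
  qed
  have ne: "{x,z} \<noteq> {x,w}" "{x,z} \<noteq> {z,w}" "{x,w} \<noteq> {z,w}" "{x,w} \<noteq> {x,z}" "{z,w} \<noteq> {x,z}" "{z,w} \<noteq> {x,w}"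
    using assms(1-3) by (auto simp: doubleton_eq_iff)
  have sub: "{x,z} \<subseteq> {x,z,w}" "{x,w} \<subseteq> {x,z,w}" "{z,w} \<subseteq> {x,z,w}" by auto
  have cc: "card {x,z} = 2" "card {x,w} = 2" "card {z,w} = 2" using assms(1-3) by auto
  show ?thesis
  proof (cases "set_deg FF {z,w} \<le> 4")
    case True
    obtain e1 e2 where E: "ordered_pairs FF {x,z,w} e1 e2 {x,z}" "set_deg FF e2 \<le> 4"
    proof (cases "set_deg FF {x,w} \<le> set_deg FF {z,w}")
      case True
      have "ordered_pairs FF {x,z,w} {x,w} {z,w} {x,z}"
        unfolding ordered_pairs_def using ne sub cc True dz \<open>set_deg FF {z,w} \<le> 4\<close> by auto
      thus ?thesis using that \<open>set_deg FF {z,w} \<le> 4\<close> by blast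
    next
      case False
      have "ordered_pairs FF {x,z,w} {z,w} {x,w} {x,z}"
        unfolding ordered_pairs_def using ne sub cc False dz dw by auto
      thus ?thesis using that dw by blast
    qed
    have c1: "\<exists>e1 e2 e3. ordered_pairs FF {x,z,w} e1 e2 e3 \<and> set_deg FF e2 \<le> 4 \<and> 4 < set_deg FF e3"
      using E dz by blast
    have c2: "\<exists>e1 e2 e3. ordered_pairs FF {x,z,w} e1 e2 e3 \<and> set_deg FF e2 \<le> 4 \<and> 4 < set_deg FF e3 \<and> x \<in> e3"
      using E dz by blast
    show ?thesis unfolding omega_def using c3 nc c1 c2 by simp
  next
    case False
    have n1: "\<not> (\<exists>e1 e2 e3. ordered_pairs FF {x,z,w} e1 e2 e3 \<and> set_deg FF e2 \<le> 4 \<and> 4 < set_deg FF e3)"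
    proof
      assume "\<exists>e1 e2 e3. ordered_pairs FF {x,z,w} e1 e2 e3 \<and> set_deg FF e2 \<le> 4 \<and> 4 < set_deg FF e3"
      then obtain e1 e2 e3 where E: "ordered_pairs FF {x,z,w} e1 e2 e3" "set_deg FF e2 \<le> 4" by blast
      have "set_deg FF e1 \<le> 4" using E unfolding ordered_pairs_def by linarith
      hence "e1 = {x,w}" "e2 = {x,w}" using pe[OF E(1)] E(2) dz False by auto
      thus False using E(1) unfolding ordered_pairs_def by simp
    qed
    obtain e2 e3 where E: "ordered_pairs FF {x,z,w} {x,w} e2 e3" "4 < set_deg FF e2"
    proof (cases "set_deg FF {x,z} \<le> set_deg FF {z,w}")
      case True
      have "ordered_pairs FF {x,z,w} {x,w} {x,z} {z,w}"
        unfolding ordered_pairs_def using ne sub cc True dz dw by auto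
      thus ?thesis using that dz by blast
    next
      case f2: False
      have "ordered_pairs FF {x,z,w} {x,w} {z,w} {x,z}"
        unfolding ordered_pairs_def using ne sub cc f2 False dw by auto
      thus ?thesis using that False by force
    qed
    have c1: "\<exists>e1 e2 e3. ordered_pairs FF {x,z,w} e1 e2 e3 \<and> set_deg FF e1 \<le> 4 \<and> 4 < set_deg FF e2"
      using E dw by blast
    have c2: "\<exists>e1 e2 e3. ordered_pairs FF {x,z,w} e1 e2 e3 \<and> set_deg FF e1 \<le> 4 \<and> 4 < set_deg FF e2 \<and> x \<in> e1"
      using E dw by blast
    show ?thesis unfolding omega_def using c3 nc n1 c1 c2 by simp
  qed
qed

lemma eps_nonmini:
  assumes "\<not> mini_weight FF x" "x \<in> Q" "finite Q" "card Q = 4"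
  shows "0 \<le> eps_Q FF x Q" "eps_Q FF x Q \<le> 1/5"
    "cQ FF Q \<le> 2 \<Longrightarrow> eps_Q FF x Q \<le> 1/15"
    "cQ FF Q \<le> 1 \<Longrightarrow> eps_Q FF x Q \<le> 1/45"
    "cQ FF Q = 0 \<Longrightarrow> eps_Q FF x Q = 0"
proof -
  have "{y\<in>Q. mini_weight FF y} \<subseteq> Q - {x}" using assms by auto
  hence "cQ FF Q \<le> 3" unfolding cQ_def using assms card_mono[of "Q - {x}"] by fastforce
  hence c: "cQ FF Q = 0 \<or> cQ FF Q = 1 \<or> cQ FF Q = 2 \<or> cQ FF Q = 3" by auto
  have e: "eps_Q FF x Q = real (cQ FF Q) / (15 * (4 - real (cQ FF Q)))"
    using assms by (simp add: eps_Q_def)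
  show "0 \<le> eps_Q FF x Q" "eps_Q FF x Q \<le> 1/5"
    "cQ FF Q \<le> 2 \<Longrightarrow> eps_Q FF x Q \<le> 1/15"
    "cQ FF Q \<le> 1 \<Longrightarrow> eps_Q FF x Q \<le> 1/45"
    "cQ FF Q = 0 \<Longrightarrow> eps_Q FF x Q = 0"
    using c unfolding e by auto
qed

lemma eps_mini: "mini_weight FF x \<Longrightarrow> eps_Q FF x Q = -1/15"
  by (simp add: eps_Q_def)



lemma mini_cards:
  assumes "mini_weight FF a"
  shows "card (Sk FF a 2) = 4" "card (Sk FF a 3) = 5" "card (Sk FF a 4) = 2"
  using assms f_i_eq[of 1 a] f_i_eq[of 2 a] f_i_eq[of 3 a]
  by (auto simp: mini_weight_def numeral_eq_Suc)

lemma M1: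
  assumes "mini_weight FF a"
  shows "card {Q \<in> Sk FF x 4. a \<in> Q} \<le> 2"
proof -
  have "{Q \<in> Sk FF x 4. a \<in> Q} \<subseteq> Sk FF a 4" by (auto simp: Sk_def)
  thus ?thesis using card_mono[OF fin_Sk] mini_cards[OF assms] by metis
qed

lemma tip_struct:
  assumes mw: "mini_weight FF a" and ax: "a \<noteq> x"
    and one: "{Q \<in> Sk FF x 4. a \<in> Q} = {Q1}"
  obtains R2 where "R2 \<in> Sk FF a 4" "R2 \<noteq> Q1" "x \<notin> R2"
    "Sk FF a 3 = TT a Q1 \<union> TT a R2" "Q1 - {x} \<subseteq> R2"
proof -
  have Q1: "Q1 \<in> Sk FF x 4" "a \<in> Q1" using one by auto
  hence Q1a: "Q1 \<in> Sk FF a 4" by (auto simp: Sk_def)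
  have "card (Sk FF a 4) = 2" using mini_cards[OF mw] by simp
  then obtain P1 P2 where P: "Sk FF a 4 = {P1,P2}" "P1 \<noteq> P2" unfolding card_2_iff by blast
  obtain R2 where R2: "R2 \<in> Sk FF a 4" "R2 \<noteq> Q1" using P Q1a by blast
  have xR2: "x \<notin> R2"
  proof
    assume "x \<in> R2"
    hence "R2 \<in> {Q \<in> Sk FF x 4. a \<in> Q}" using R2 by (auto simp: Sk_def)
    thus False using one R2 by auto
  qed
  have "card (TT a Q1 \<union> TT a R2) \<ge> 5" using two_Q[OF Q1a R2(1)] R2 by simp
  moreover have sub: "TT a Q1 \<union> TT a R2 \<subseteq> Sk FF a 3" using TT_sub Q1a R2 by blast
  moreover have "card (TT a Q1 \<union> TT a R2) \<le> card (Sk FF a 3)" by (rule card_mono[OF fin_Sk sub])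
  ultimately have "card (TT a Q1 \<union> TT a R2) = card (Sk FF a 3)" using mini_cards[OF mw] by linarith
  hence S3: "Sk FF a 3 = TT a Q1 \<union> TT a R2" using card_subset_eq[OF fin_Sk sub] by simp
  have fQ: "finite Q1" "finite R2" using Q1a R2 finF by (auto simp: Sk_def)
  have c4: "card Q1 = 4" "card R2 = 4" using Q1a R2 by (auto simp: Sk_def)
  have "Q1 - {a} \<subseteq> Nb FF a" "R2 - {a} \<subseteq> Nb FF a" using in_Nb Q1a R2 by (auto simp: Sk_def)
  hence "Q1 \<union> R2 \<subseteq> insert a (Nb FF a)" by blast
  moreover have "card (insert a (Nb FF a)) \<le> 5"
    using fin_Nb[of a] Nb_card[of a] mini_cards[OF mw] by (simp add: card_insert_if)
  ultimately have "card (Q1 \<union> R2) \<le> 5"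
    using card_mono[of "insert a (Nb FF a)" "Q1 \<union> R2"] fin_Nb[of a] by simp
  hence ci: "card (Q1 \<inter> R2) \<ge> 3" using card_Un_Int[OF fQ] c4 by linarith
  have "Q1 \<inter> R2 \<subseteq> Q1 - {x}" using xR2 by blast
  moreover have "card (Q1 - {x}) = 3" using c4 fQ Q1 by (simp add: Sk_def)
  ultimately have "Q1 \<inter> R2 = Q1 - {x}"
  proof -
    assume s1: "Q1 \<inter> R2 \<subseteq> Q1 - {x}" and c3: "card (Q1 - {x}) = 3"
    have "card (Q1 \<inter> R2) \<le> card (Q1 - {x})" using card_mono[OF _ s1] fQ by simp
    hence "card (Q1 \<inter> R2) = card (Q1 - {x})" using ci c3 by linarith
    thus ?thesis using card_subset_eq[OF _ s1] fQ by simp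
  qed
  hence "Q1 - {x} \<subseteq> R2" by blast
  thus ?thesis using that R2 xR2 S3 by blast
qed

lemma M2:
  assumes mw: "mini_weight FF a" and ax: "a \<noteq> x"
    and one: "{Q \<in> Sk FF x 4. a \<in> Q} = {Q1}"
  shows "\<And>F. F \<in> Sk FF x 3 \<Longrightarrow> a \<in> F \<Longrightarrow> F \<subseteq> Q1"
    and "card {F \<in> Sk FF x 3. a \<in> F} \<le> 2"
proof -
  obtain R2 where R2: "R2 \<in> Sk FF a 4" "R2 \<noteq> Q1" "x \<notin> R2"
    "Sk FF a 3 = TT a Q1 \<union> TT a R2" "Q1 - {x} \<subseteq> R2" by (rule tip_struct[OF mw ax one])
  have Q1: "Q1 \<in> Sk FF x 4" "a \<in> Q1" using one by auto
  have sub: "F \<in> TT a Q1" if F: "F \<in> Sk FF x 3" "a \<in> F" for F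
  proof -
    have "F \<in> Sk FF a 3" using F by (auto simp: Sk_def)
    hence "F \<in> TT a Q1 \<or> F \<in> TT a R2" using R2 by blast
    moreover have "F \<notin> TT a R2" using F R2(3) by (auto simp: TT_def Sk_def)
    ultimately show ?thesis by blast
  qed
  thus "\<And>F. F \<in> Sk FF x 3 \<Longrightarrow> a \<in> F \<Longrightarrow> F \<subseteq> Q1" by (auto simp: TT_def)
  have fQ: "finite Q1" "card Q1 = 4" using Q1 finF by (auto simp: Sk_def)
  have "{F \<in> Sk FF x 3. a \<in> F} \<subseteq> (\<lambda>y. Q1 - {y}) ` (Q1 - {a,x})"
  proof
    fix F assume F: "F \<in> {F \<in> Sk FF x 3. a \<in> F}"
    hence "F \<in> TT a Q1" using sub by blast
    then obtain y where y: "y \<in> Q1 - {a}" "F = Q1 - {y}" using TT_eq(1)[OF fQ Q1(2)] by blast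
    have "y \<noteq> x" using F y by (auto simp: Sk_def)
    thus "F \<in> (\<lambda>y. Q1 - {y}) ` (Q1 - {a,x})" using y by blast
  qed
  hence "card {F \<in> Sk FF x 3. a \<in> F} \<le> card ((\<lambda>y. Q1 - {y}) ` (Q1 - {a,x}))"
    using card_mono[of "(\<lambda>y. Q1 - {y}) ` (Q1 - {a,x})"] fQ by simp
  also have "\<dots> \<le> card (Q1 - {a,x})" using card_image_le fQ by blast
  also have "\<dots> = 2" using fQ Q1 ax by (simp add: Sk_def card_Diff_subset)
  finally show "card {F \<in> Sk FF x 3. a \<in> F} \<le> 2" .
qed


lemma decomp:
  assumes "{x} \<in> FF"
  shows "weight FF x = 1 + real (card (Sk FF x 2)) / 2 + (\<Sum>F\<in>Sk FF x 3. omega FF x F)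
            + real (card (Sk FF x 4)) / 4 + (\<Sum>F\<in>Sbig FF x. omega FF x F)"
    and "eps FF x = (\<Sum>Q\<in>Sk FF x 4. eps_Q FF x Q)"
    and "deg FF x = 1 + card (Sk FF x 2) + card (Sk FF x 3) + card (Sk FF x 4) + card (Sbig FF x)"
    and "(\<Sum>F\<in>Sbig FF x. omega FF x F) \<ge> 0"
proof -
  have A: "{F\<in>FF. x\<in>F} = {{x}} \<union> Sk FF x 2 \<union> Sk FF x 3 \<union> Sk FF x 4 \<union> Sbig FF x"
    using A_decomp[OF assms] .
  have f: "finite {{x}}" "finite (Sk FF x 2)" "finite (Sk FF x 3)" "finite (Sk FF x 4)" "finite (Sbig FF x)"
    using fin_Sk fin_Sbig by auto
  have d1: "{{x}} \<inter> Sk FF x 2 = {}" by (auto simp: Sk_def)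
  have d2: "({{x}} \<union> Sk FF x 2) \<inter> Sk FF x 3 = {}" by (auto simp: Sk_def)
  have d3: "({{x}} \<union> Sk FF x 2 \<union> Sk FF x 3) \<inter> Sk FF x 4 = {}" by (auto simp: Sk_def)
  have d4: "({{x}} \<union> Sk FF x 2 \<union> Sk FF x 3 \<union> Sk FF x 4) \<inter> Sbig FF x = {}" by (auto simp: Sk_def Sbig_def)
  have sumA: "(\<Sum>F\<in>{F\<in>FF. x\<in>F}. g F) = g {x} + sum g (Sk FF x 2) + sum g (Sk FF x 3) + sum g (Sk FF x 4) + sum g (Sbig FF x)"
    for g :: "'a set \<Rightarrow> 'b::comm_monoid_add"
    unfolding A using f d1 d2 d3 d4 by (simp add: sum.union_disjoint add.assoc)
  have s2: "(\<Sum>F\<in>Sk FF x 2. omega FF x F) = real (card (Sk FF x 2)) / 2"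
  proof -
    have "(\<Sum>F\<in>Sk FF x 2. omega FF x F) = (\<Sum>F\<in>Sk FF x 2. 1/2)"
      by (rule sum.cong) (auto simp: Sk_def W_ne3)
    thus ?thesis by simp
  qed
  have s4: "(\<Sum>F\<in>Sk FF x 4. omega FF x F) = real (card (Sk FF x 4)) / 4"
  proof -
    have "(\<Sum>F\<in>Sk FF x 4. omega FF x F) = (\<Sum>F\<in>Sk FF x 4. 1/4)"
      by (rule sum.cong) (auto simp: Sk_def W_ne3)
    thus ?thesis by simp
  qed
  show "weight FF x = 1 + real (card (Sk FF x 2)) / 2 + (\<Sum>F\<in>Sk FF x 3. omega FF x F)
            + real (card (Sk FF x 4)) / 4 + (\<Sum>F\<in>Sbig FF x. omega FF x F)"
    unfolding weight_def sumA s2 s4 by (simp add: W_ne3)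
  have "{Q \<in> FF. card Q = 4 \<and> x \<in> Q} = Sk FF x 4" by (auto simp: Sk_def)
  thus "eps FF x = (\<Sum>Q\<in>Sk FF x 4. eps_Q FF x Q)" by (simp add: eps_def)
  have "card {F\<in>FF. x\<in>F} = 1 + card (Sk FF x 2) + card (Sk FF x 3) + card (Sk FF x 4) + card (Sbig FF x)"
    using sumA[of "\<lambda>_. 1::nat"] by simp
  thus "deg FF x = 1 + card (Sk FF x 2) + card (Sk FF x 3) + card (Sk FF x 4) + card (Sbig FF x)"
    using deg_eq by simp
  show "(\<Sum>F\<in>Sbig FF x. omega FF x F) \<ge> 0"
    by (rule sum_nonneg) (auto simp: Sbig_def W_ne3)
qed


lemma SIG3:
  assumes C: "C \<subseteq> Sk FF x 3" "\<forall>F\<in>C. \<exists>Q\<in>FF. card Q = 4 \<and> F \<subseteq> Q"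
    and D: "D \<subseteq> Sk FF x 3 - C" "\<forall>F\<in>D. omega FF x F = 7/20"
  shows "(\<Sum>F\<in>Sk FF x 3. omega FF x F) \<ge> real (card C) / 3 + 7/20 * real (card D)
            + 3/10 * (real (card (Sk FF x 3)) - real (card C) - real (card D))"
proof -
  let ?S = "Sk FF x 3"
  have fS: "finite ?S" by (rule fin_Sk)
  have fC: "finite C" "finite D" using C D fS finite_subset by blast+
  have e: "?S = C \<union> D \<union> (?S - C - D)" using C D by blast
  have sC: "(\<Sum>F\<in>C. omega FF x F) = real (card C) / 3"
  proof -
    have "(\<Sum>F\<in>C. omega FF x F) = (\<Sum>F\<in>C. 1/3)"
    proof (rule sum.cong)
      fix F assume "F \<in> C"
      moreover then obtain Q where "Q \<in> FF" "card Q = 4" "F \<subseteq> Q" using C by blast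
      moreover have "card F = 3" using C \<open>F \<in> C\<close> by (auto simp: Sk_def)
      ultimately show "omega FF x F = 1/3" using W_cov by blast
    qed simp
    thus ?thesis by simp
  qed
  have sD: "(\<Sum>F\<in>D. omega FF x F) = 7/20 * real (card D)"
  proof -
    have "(\<Sum>F\<in>D. omega FF x F) = (\<Sum>F\<in>D. 7/20)" using D(2) by (intro sum.cong) auto
    thus ?thesis by simp
  qed
  have sR: "(\<Sum>F\<in>?S - C - D. omega FF x F) \<ge> (\<Sum>F\<in>?S - C - D. 3/10)"
    by (rule sum_mono) (use W_ge in \<open>auto simp: Sk_def\<close>)
  have cR: "card (?S - C - D) = card ?S - card C - card D"
  proof -
    have "card (?S - C - D) = card (?S - C) - card D" using D fC by (simp add: card_Diff_subset)
    moreover have "card (?S - C) = card ?S - card C" using C fC by (simp add: card_Diff_subset)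
    ultimately show ?thesis by simp
  qed
  have le: "card C + card D \<le> card ?S"
  proof -
    have "card (C \<union> D) = card C + card D" using D fC by (subst card_Un_disjoint) auto
    moreover have "card (C \<union> D) \<le> card ?S" using C D fS by (intro card_mono) auto
    ultimately show ?thesis by simp
  qed
  have "(\<Sum>F\<in>?S. omega FF x F) = (\<Sum>F\<in>C. omega FF x F) + (\<Sum>F\<in>D. omega FF x F) + (\<Sum>F\<in>?S - C - D. omega FF x F)"
    using fC fS D by (subst e, subst sum.union_disjoint, auto, subst sum.union_disjoint, auto)
  moreover have "real (card (?S - C - D)) = real (card ?S) - real (card C) - real (card D)"
    using cR le by simp
  ultimately show ?thesis using sC sD sR by simp
qed

lemma cQ_bound:
  assumes "finite Q" "B \<subseteq> Q" "\<forall>y\<in>B. \<not> mini_weight FF y"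
  shows "cQ FF Q \<le> card Q - card B"
proof -
  have "{y\<in>Q. mini_weight FF y} \<subseteq> Q - B" using assms by auto
  hence "cQ FF Q \<le> card (Q - B)" unfolding cQ_def using assms card_mono by (metis finite_Diff)
  thus ?thesis using assms by (simp add: card_Diff_subset finite_subset)
qed

lemma eps_nonneg:
  assumes "\<not> mini_weight FF x"
  shows "(\<Sum>Q\<in>Sk FF x 4. eps_Q FF x Q) \<ge> 0"
  by (rule sum_nonneg) (use assms finF in \<open>auto simp: Sk_def intro: eps_nonmini(1)\<close>)

lemma SD_up:
  assumes "x \<noteq> w" "\<forall>Q\<in>Sk FF x 4. w \<notin> Q"
  shows "set_deg FF {x,w} \<le> 1 + card {F\<in>Sk FF x 3. w\<in>F}"
proof -
  have "{F\<in>FF. {x,w} \<subseteq> F} \<subseteq> insert {x,w} {F\<in>Sk FF x 3. w\<in>F}"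
  proof
    fix F assume F: "F \<in> {F\<in>FF. {x,w} \<subseteq> F}"
    hence fF: "finite F" and FF: "F \<in> FF" and sF: "{x,w} \<subseteq> F" using finF by auto
    have c2: "card F \<ge> 2" using card_mono[OF fF sF] assms by simp
    show "F \<in> insert {x,w} {F\<in>Sk FF x 3. w\<in>F}"
    proof (cases "card F \<ge> 4")
      case True
      then obtain G where G: "{x,w} \<subseteq> G" "G \<subseteq> F" "card G = 4"
        using sub_card[OF fF sF, of 4] assms by auto
      have "G \<in> Sk FF x 4" using G herI[OF FF] by (auto simp: Sk_def)
      thus ?thesis using G assms by auto
    next
      case False
      show ?thesis
      proof (cases "card F = 2")
        case True
        hence "F = {x,w}" using card_subset_eq[OF fF sF] assms by simp
        thus ?thesis by simp
      next
        case f2: False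
        hence "card F = 3" using c2 False by simp
        thus ?thesis using FF sF by (auto simp: Sk_def)
      qed
    qed
  qed
  hence "set_deg FF {x,w} \<le> card (insert {x,w} {F\<in>Sk FF x 3. w\<in>F})"
    unfolding set_deg_def by (rule card_mono[rotated]) (simp add: fin_Sk)
  also have "\<dots> \<le> 1 + card {F\<in>Sk FF x 3. w\<in>F}"
    using card_insert_le_m1 fin_Sk by (simp add: card_insert_if)
  finally show ?thesis .
qed

lemma SD_low:
  assumes "x \<noteq> a" "{x,a} \<in> FF"
  shows "set_deg FF {x,a} \<ge> 1 + card {F\<in>Sk FF x 3. a\<in>F} + card {Q\<in>Sk FF x 4. a\<in>Q}"
proof -
  let ?A = "{F\<in>Sk FF x 3. a\<in>F}" and ?B = "{Q\<in>Sk FF x 4. a\<in>Q}"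
  have fA: "finite ?A" "finite ?B" using fin_Sk by auto
  have sub: "insert {x,a} (?A \<union> ?B) \<subseteq> {F\<in>FF. {x,a} \<subseteq> F}" using assms by (auto simp: Sk_def)
  have n: "{x,a} \<notin> ?A \<union> ?B" using assms by (auto simp: Sk_def)
  have d: "?A \<inter> ?B = {}" by (auto simp: Sk_def)
  have "card (insert {x,a} (?A \<union> ?B)) = 1 + card ?A + card ?B"
    using fA n d by (simp add: card_Un_disjoint)
  moreover have "card (insert {x,a} (?A \<union> ?B)) \<le> set_deg FF {x,a}"
    unfolding set_deg_def by (rule card_mono[OF _ sub]) (simp add: finFF)
  ultimately show ?thesis by simp
qed

lemma S3_all: "{F \<in> Sk FF x 3. F - {x} \<subseteq> Nb FF x} = Sk FF x 3"
  using in_Nb by (auto simp: Sk_def)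

lemma deg_a_n4:
  assumes "card (Sk FF x 2) = 4" "card (Sk FF x 3) = 6" "a \<in> Nb FF x"
  shows "card {F\<in>Sk FF x 3. a\<in>F} \<ge> 3"
proof -
  have cN: "card (Nb FF x - {a}) = 3" using assms Nb_card fin_Nb by simp
  have "{F\<in>Sk FF x 3. a\<notin>F} \<subseteq> {F \<in> Sk FF x 3. F - {x} \<subseteq> Nb FF x - {a}}"
    using in_Nb by (auto simp: Sk_def)
  hence "card {F\<in>Sk FF x 3. a\<notin>F} \<le> card {F \<in> Sk FF x 3. F - {x} \<subseteq> Nb FF x - {a}}"
    by (rule card_mono[rotated]) (simp add: fin_Sk)
  also have "\<dots> \<le> card (Nb FF x - {a}) choose 2" using S3_bound fin_Nb by blast
  also have "\<dots> = 3" using cN by (simp add: choose_two)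
  finally have "card {F\<in>Sk FF x 3. a\<notin>F} \<le> 3" .
  moreover have "card (Sk FF x 3) = card {F\<in>Sk FF x 3. a\<in>F} + card {F\<in>Sk FF x 3. a\<notin>F}"
    using fin_Sk by (subst card_Un_disjoint[symmetric]) (auto intro: arg_cong[where f=card])
  ultimately show ?thesis using assms by simp
qed


lemma key_expr:
  assumes "{x} \<in> FF"
  shows "weight FF x - eps FF x = 1 + real (card (Sk FF x 2)) / 2 + (\<Sum>F\<in>Sk FF x 3. omega FF x F)
            + (\<Sum>Q\<in>Sk FF x 4. 1/4 - eps_Q FF x Q) + (\<Sum>F\<in>Sbig FF x. omega FF x F)"
proof -
  have "(\<Sum>Q\<in>Sk FF x 4. 1/4 - eps_Q FF x Q) = real (card (Sk FF x 4)) / 4 - (\<Sum>Q\<in>Sk FF x 4. eps_Q FF x Q)"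
    by (simp add: sum_subtractf)
  thus ?thesis using decomp[OF assms] by simp
qed

lemma Pterm:
  assumes "\<not> mini_weight FF x" "Q \<in> Sk FF x 4"
  shows "1/4 - eps_Q FF x Q \<ge> 1/20"
    and "a \<in> Q \<Longrightarrow> a \<noteq> x \<Longrightarrow> \<not> mini_weight FF a \<Longrightarrow> 1/4 - eps_Q FF x Q \<ge> 11/60"
    and "cQ FF Q = 0 \<Longrightarrow> eps_Q FF x Q = 0"
proof -
  have Q: "x \<in> Q" "finite Q" "card Q = 4" using assms finF by (auto simp: Sk_def)
  show "1/4 - eps_Q FF x Q \<ge> 1/20" using eps_nonmini(2)[OF assms(1) Q] by simp
  show "cQ FF Q = 0 \<Longrightarrow> eps_Q FF x Q = 0" using eps_nonmini(5)[OF assms(1) Q] by simp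
  assume a: "a \<in> Q" "a \<noteq> x" "\<not> mini_weight FF a"
  have "cQ FF Q \<le> card Q - card {x,a}"
    by (rule cQ_bound) (use Q a assms in auto)
  hence "cQ FF Q \<le> 2" using Q a by simp
  thus "1/4 - eps_Q FF x Q \<ge> 11/60" using eps_nonmini(3)[OF assms(1) Q] by simp
qed

lemma Psub:
  assumes "\<not> mini_weight FF x" "K \<subseteq> Sk FF x 4"
  shows "(\<Sum>Q\<in>Sk FF x 4. 1/4 - eps_Q FF x Q) \<ge> (\<Sum>Q\<in>K. 1/4 - eps_Q FF x Q)"
    and "(\<Sum>Q\<in>Sk FF x 4. 1/4 - eps_Q FF x Q) \<ge> real (card (Sk FF x 4)) / 20"
proof -
  show "(\<Sum>Q\<in>Sk FF x 4. 1/4 - eps_Q FF x Q) \<ge> (\<Sum>Q\<in>K. 1/4 - eps_Q FF x Q)"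
    by (rule sum_mono2[OF fin_Sk assms(2)]) (use Pterm(1)[OF assms(1)] in force)
  have "(\<Sum>Q\<in>Sk FF x 4. 1/4 - eps_Q FF x Q) \<ge> (\<Sum>Q\<in>Sk FF x 4. 1/20)"
    by (rule sum_mono) (use Pterm(1)[OF assms(1)] in force)
  thus "(\<Sum>Q\<in>Sk FF x 4. 1/4 - eps_Q FF x Q) \<ge> real (card (Sk FF x 4)) / 20" by simp
qed

lemma only_one:
  assumes "Sk FF x 4 = {Q}" "a \<in> Q"
  shows "{Q' \<in> Sk FF x 4. a \<in> Q'} = {Q}"
  using assms by auto

lemma only_one2:
  assumes "Sk FF x 4 = {Q1,Q2}" "a \<in> Q1" "a \<notin> Q2"
  shows "{Q' \<in> Sk FF x 4. a \<in> Q'} = {Q1}"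
  using assms by auto

lemma diff_elem:
  assumes "Q1 \<in> Sk FF x 4" "Q2 \<in> Sk FF x 4" "Q1 \<noteq> Q2"
  obtains a where "a \<in> Q1" "a \<notin> Q2" "a \<noteq> x"
proof -
  have "finite Q2" "card Q1 = card Q2" using assms finF by (auto simp: Sk_def)
  hence "\<not> Q1 \<subseteq> Q2" using card_subset_eq assms(3) by blast
  then obtain a where "a \<in> Q1" "a \<notin> Q2" by blast
  moreover have "x \<in> Q2" using assms by (auto simp: Sk_def)
  ultimately show ?thesis using that by blast
qed


lemma three_elems:
  assumes "card S \<ge> 3"
  obtains a b c where "a \<in> S" "b \<in> S" "c \<in> S" "a \<noteq> b" "a \<noteq> c" "b \<noteq> c"
proof -
  obtain T where "T \<subseteq> S" "card T = 3" using obtain_subset_with_card_n[OF assms] by blast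
  thus ?thesis using that unfolding card_3_iff by blast
qed

lemma spec46big:
  assumes nm: "\<not> mini_weight FF x" and c2: "card (Sk FF x 2) = 4" and c4: "card (Sk FF x 4) \<ge> 3"
  shows "(\<Sum>Q\<in>Sk FF x 4. 1/4 - eps_Q FF x Q) \<ge> 33/60"
proof -
  obtain Q1 Q2 Q3 where Q: "Q1 \<in> Sk FF x 4" "Q2 \<in> Sk FF x 4" "Q3 \<in> Sk FF x 4"
    "Q1 \<noteq> Q2" "Q1 \<noteq> Q3" "Q2 \<noteq> Q3" using three_elems[OF c4] by blast
  have cN: "card (Nb FF x) = 4" using c2 Nb_card by simp
  have fN: "finite (Nb FF x)" by (rule fin_Nb)
  have sub: "Q1 - {x} \<subseteq> Nb FF x" "Q2 - {x} \<subseteq> Nb FF x" "Q3 - {x} \<subseteq> Nb FF x"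
    using in_Nb Q by (auto simp: Sk_def)
  have fQ: "finite Q1" "finite Q2" "finite Q3" using Q finF by (auto simp: Sk_def)
  have cQ: "card (Q1 - {x}) = 3" "card (Q2 - {x}) = 3" "card (Q3 - {x}) = 3"
    using Q fQ by (auto simp: Sk_def)
  have "card ((Q1 - {x}) \<union> (Q2 - {x})) \<le> 4"
    using card_mono[OF fN, of "(Q1 - {x}) \<union> (Q2 - {x})"] sub cN by simp
  hence i12: "card ((Q1 - {x}) \<inter> (Q2 - {x})) \<ge> 2"
    using card_Un_Int[of "Q1 - {x}" "Q2 - {x}"] fQ cQ by simp
  have "card (((Q1 - {x}) \<inter> (Q2 - {x})) \<union> (Q3 - {x})) \<le> 4"
    using card_mono[OF fN, of "((Q1 - {x}) \<inter> (Q2 - {x})) \<union> (Q3 - {x})"] sub cN by auto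
  hence "card (((Q1 - {x}) \<inter> (Q2 - {x})) \<inter> (Q3 - {x})) \<ge> 1"
    using card_Un_Int[of "(Q1 - {x}) \<inter> (Q2 - {x})" "Q3 - {x}"] fQ cQ i12 by simp
  hence "((Q1 - {x}) \<inter> (Q2 - {x})) \<inter> (Q3 - {x}) \<noteq> {}" by auto
  then obtain a where a: "a \<in> Q1" "a \<in> Q2" "a \<in> Q3" "a \<noteq> x" by blast
  have nma: "\<not> mini_weight FF a"
  proof
    assume "mini_weight FF a"
    hence "card {Q \<in> Sk FF x 4. a \<in> Q} \<le> 2" by (rule M1)
    moreover have "{Q1,Q2,Q3} \<subseteq> {Q \<in> Sk FF x 4. a \<in> Q}" using Q a by auto
    hence "card {Q1,Q2,Q3} \<le> card {Q \<in> Sk FF x 4. a \<in> Q}" by (rule card_mono[rotated]) (simp add: fin_Sk)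
    ultimately show False using Q by simp
  qed
  have "(\<Sum>Q\<in>Sk FF x 4. 1/4 - eps_Q FF x Q) \<ge> (\<Sum>Q\<in>{Q1,Q2,Q3}. 1/4 - eps_Q FF x Q)"
    by (rule Psub(1)[OF nm]) (use Q in auto)
  also have "(\<Sum>Q\<in>{Q1,Q2,Q3}. 1/4 - eps_Q FF x Q) = (1/4 - eps_Q FF x Q1) + (1/4 - eps_Q FF x Q2) + (1/4 - eps_Q FF x Q3)"
    using Q by simp
  finally show ?thesis using Pterm(2)[OF nm Q(1) a(1) a(4) nma] Pterm(2)[OF nm Q(2) a(2) a(4) nma]
      Pterm(2)[OF nm Q(3) a(3) a(4) nma] by linarith
qed

lemma spec462:
  assumes nm: "\<not> mini_weight FF x" and c2: "card (Sk FF x 2) = 4" and c3: "card (Sk FF x 3) = 6"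
    and c4: "card (Sk FF x 4) = 2"
  shows "(\<Sum>Q\<in>Sk FF x 4. 1/4 - eps_Q FF x Q) \<ge> 22/60"
proof -
  obtain Q1 Q2 where Q: "Sk FF x 4 = {Q1,Q2}" "Q1 \<noteq> Q2" using c4 unfolding card_2_iff by blast
  have Qin: "Q1 \<in> Sk FF x 4" "Q2 \<in> Sk FF x 4" using Q by auto
  have nm_of: "\<not> mini_weight FF a" if a: "a \<in> Qa" "a \<notin> Qb" "a \<noteq> x" "Sk FF x 4 = {Qa,Qb}" for a Qa Qb
  proof
    assume mw: "mini_weight FF a"
    have one: "{Q' \<in> Sk FF x 4. a \<in> Q'} = {Qa}" using only_one2[OF a(4) a(1) a(2)] .
    have "card {F \<in> Sk FF x 3. a \<in> F} \<le> 2" using M2(2)[OF mw _ one] a by simp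
    moreover have "a \<in> Nb FF x" using in_Nb a that by (auto simp: Sk_def)
    hence "card {F \<in> Sk FF x 3. a \<in> F} \<ge> 3" using deg_a_n4 c2 c3 by blast
    ultimately show False by simp
  qed
  obtain a1 where a1: "a1 \<in> Q1" "a1 \<notin> Q2" "a1 \<noteq> x" using diff_elem[OF Qin Q(2)] by blast
  obtain a2 where a2: "a2 \<in> Q2" "a2 \<notin> Q1" "a2 \<noteq> x" using diff_elem[OF Qin(2) Qin(1)] Q(2) by blast
  have n1: "\<not> mini_weight FF a1" using nm_of[OF a1 Q(1)] .
  have n2: "\<not> mini_weight FF a2" using nm_of[OF a2] Q(1) by (simp add: insert_commute)
  have "(\<Sum>Q\<in>Sk FF x 4. 1/4 - eps_Q FF x Q) = (1/4 - eps_Q FF x Q1) + (1/4 - eps_Q FF x Q2)"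
    using Q by simp
  thus ?thesis using Pterm(2)[OF nm Qin(1) a1(1) a1(3) n1] Pterm(2)[OF nm Qin(2) a2(1) a2(3) n2] by linarith
qed


lemma spec461:
  assumes nm: "\<not> mini_weight FF x" and c2: "card (Sk FF x 2) = 4" and c3: "card (Sk FF x 3) = 6"
    and c4: "card (Sk FF x 4) = 1"
  shows "(\<Sum>Q\<in>Sk FF x 4. eps_Q FF x Q) = 0" and "(\<Sum>F\<in>Sk FF x 3. omega FF x F) \<ge> 41/20"
proof -
  obtain Q where Q: "Sk FF x 4 = {Q}" using c4 card_1_singletonE by blast
  have Qin: "Q \<in> Sk FF x 4" using Q by auto
  have fQ: "finite Q" "card Q = 4" "x \<in> Q" "Q \<in> FF" using Qin finF by (auto simp: Sk_def)
  have cN: "card (Nb FF x) = 4" using c2 Nb_card by simp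
  have subN: "Q - {x} \<subseteq> Nb FF x" using in_Nb fQ by auto
  have deg3: "card {F \<in> Sk FF x 3. a \<in> F} \<ge> 3" if "a \<in> Q" "a \<noteq> x" for a
    using deg_a_n4[OF c2 c3] subN that by blast
  have nma: "\<not> mini_weight FF a" if a: "a \<in> Q" "a \<noteq> x" for a
  proof
    assume mw: "mini_weight FF a"
    have "card {F \<in> Sk FF x 3. a \<in> F} \<le> 2" using M2(2)[OF mw _ only_one[OF Q a(1)]] a by simp
    thus False using deg3[OF a] by simp
  qed
  have "cQ FF Q \<le> card Q - card Q" by (rule cQ_bound) (use fQ nm nma in auto)
  hence "eps_Q FF x Q = 0" using Pterm(3)[OF nm Qin] by simp
  thus "(\<Sum>Q\<in>Sk FF x 4. eps_Q FF x Q) = 0" using Q by simp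
  have "card (Nb FF x - (Q - {x})) = 1" using cN subN fQ by (simp add: card_Diff_subset)
  then obtain d where d: "Nb FF x - (Q - {x}) = {d}" using card_1_singletonE by blast
  have dQ: "d \<notin> Q" "d \<noteq> x" "d \<in> Nb FF x" using d by (auto simp: Nb_def)
  let ?C = "TT x Q" and ?D = "Sk FF x 3 - TT x Q"
  have CS: "?C \<subseteq> Sk FF x 3" using TT_sub[OF Qin] .
  have cC: "card ?C = 3" using TT_card[OF Qin] .
  have cD: "card ?D = 3" using CS cC c3 finTT[OF fQ(4)] by (simp add: card_Diff_subset)
  have Cc: "\<forall>F\<in>?C. \<exists>Q'\<in>FF. card Q' = 4 \<and> F \<subseteq> Q'" using fQ by (auto simp: TT_def)
  have dnot: "card {F\<in>Sk FF x 3. d\<in>F} \<le> 3"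
  proof -
    have "{F\<in>Sk FF x 3. d\<in>F} \<subseteq> ?D" using dQ by (auto simp: TT_def)
    thus ?thesis using cD card_mono[of ?D] fin_Sk by (metis finite_Diff)
  qed
  have sdd: "set_deg FF {x,d} \<le> 4"
    using SD_up[of x d] dQ Q dnot by auto
  have D7: "\<forall>F\<in>?D. omega FF x F = 7/20"
  proof
    fix F assume F: "F \<in> ?D"
    hence FS: "F \<in> FF" "x \<in> F" "card F = 3" and nT: "F \<notin> TT x Q" by (auto simp: Sk_def)
    have fF: "finite F" using FS finF by auto
    have nsub: "\<not> F \<subseteq> Q" using nT FS by (auto simp: TT_def)
    have FN: "F - {x} \<subseteq> Nb FF x" using in_Nb FS by auto
    have dF: "d \<in> F"
    proof (rule ccontr)
      assume "d \<notin> F"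
      have "F \<subseteq> Q"
      proof
        fix y assume y: "y \<in> F"
        show "y \<in> Q"
        proof (cases "y = x")
          case True thus ?thesis using fQ by simp
        next
          case False
          hence "y \<in> Nb FF x" using FN y by blast
          moreover have "y \<noteq> d" using \<open>d \<notin> F\<close> y by blast
          ultimately show ?thesis using d by blast
        qed
      qed
      thus False using nsub by simp
    qed
    have "card (F - {x} - {d}) = 1" using FS fF dF dQ by simp
    then obtain a where a: "F - {x} - {d} = {a}" using card_1_singletonE by blast
    have Feq: "F = {x,a,d}" using a FS dF by auto
    have aQ: "a \<in> Q" "a \<noteq> x" "a \<noteq> d" using a FN d by auto
    have nc: "\<not> (\<exists>Q'\<in>FF. card Q' = 4 \<and> {x,a,d} \<subseteq> Q')"
    proof
      assume "\<exists>Q'\<in>FF. card Q' = 4 \<and> {x,a,d} \<subseteq> Q'"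
      then obtain Q' where "Q' \<in> FF" "card Q' = 4" "{x,a,d} \<subseteq> Q'" by blast
      hence "Q' \<in> Sk FF x 4" by (auto simp: Sk_def)
      hence "Q' = Q" using Q by auto
      thus False using \<open>{x,a,d} \<subseteq> Q'\<close> dQ by auto
    qed
    have xa: "{x,a} \<in> FF" using herI[OF fQ(4)] aQ fQ by auto
    have "set_deg FF {x,a} \<ge> 1 + 3 + 1"
    proof -
      have "card {Q'\<in>Sk FF x 4. a\<in>Q'} = 1" using only_one[OF Q aQ(1)] by simp
      thus ?thesis using SD_low[OF aQ(2)[symmetric] xa] deg3[OF aQ(1,2)] by simp
    qed
    hence "set_deg FF {x,a} > 4" by simp
    thus "omega FF x F = 7/20" unfolding Feq using W_mixed[OF aQ(2)[symmetric] dQ(2)[symmetric] aQ(3) nc _ sdd] by simp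
  qed
  have "(\<Sum>F\<in>Sk FF x 3. omega FF x F) \<ge> real (card ?C) / 3 + 7/20 * real (card ?D)
            + 3/10 * (real (card (Sk FF x 3)) - real (card ?C) - real (card ?D))"
    by (rule SIG3[OF CS Cc _ D7]) simp
  thus "(\<Sum>F\<in>Sk FF x 3. omega FF x F) \<ge> 41/20" using cC cD c3 by simp
qed


lemma TT_cont:
  assumes "Q \<in> Sk FF x 4" "v \<in> Q" "v \<noteq> x"
  shows "(\<lambda>y. Q - {y}) ` (Q - {x,v}) \<subseteq> {F\<in>Sk FF x 3. v\<in>F}"
    and "card ((\<lambda>y. Q - {y}) ` (Q - {x,v})) = 2"
    and "(\<lambda>y. Q - {y}) ` (Q - {x,v}) \<subseteq> TT x Q"
proof -
  have fQ: "finite Q" "card Q = 4" "x \<in> Q" using assms finF by (auto simp: Sk_def)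
  show s: "(\<lambda>y. Q - {y}) ` (Q - {x,v}) \<subseteq> TT x Q" using TT_eq(1)[OF fQ] by auto
  thus "(\<lambda>y. Q - {y}) ` (Q - {x,v}) \<subseteq> {F\<in>Sk FF x 3. v\<in>F}" using TT_sub[OF assms(1)] assms(2) by auto
  have "inj_on (\<lambda>y. Q - {y}) (Q - {x,v})" by (auto simp: inj_on_def)
  thus "card ((\<lambda>y. Q - {y}) ` (Q - {x,v})) = 2" using fQ assms by (simp add: card_image card_Diff_subset)
qed

lemma spec551:
  assumes nm: "\<not> mini_weight FF x" and c2: "card (Sk FF x 2) = 5" and c3: "card (Sk FF x 3) = 5"
    and c4: "card (Sk FF x 4) = 1"
  shows "(\<Sum>F\<in>Sk FF x 3. omega FF x F) \<ge> 33/20" and "(\<Sum>Q\<in>Sk FF x 4. 1/4 - eps_Q FF x Q) \<ge> 11/60"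
proof -
  obtain Q where Q: "Sk FF x 4 = {Q}" using c4 card_1_singletonE by blast
  have Qin: "Q \<in> Sk FF x 4" using Q by auto
  have fQ: "finite Q" "card Q = 4" "x \<in> Q" "Q \<in> FF" using Qin finF by (auto simp: Sk_def)
  have cN: "card (Nb FF x) = 5" using c2 Nb_card by simp
  have subN: "Q - {x} \<subseteq> Nb FF x" using in_Nb fQ by auto
  let ?C = "TT x Q" and ?R = "Sk FF x 3 - TT x Q"
  have CS: "?C \<subseteq> Sk FF x 3" using TT_sub[OF Qin] .
  have cC: "card ?C = 3" using TT_card[OF Qin] .
  have cR: "card ?R = 2" using CS cC c3 finTT[OF fQ(4)] by (simp add: card_Diff_subset)
  have fR: "finite ?R" using fin_Sk by simp
  have Cc: "\<forall>F\<in>?C. \<exists>Q'\<in>FF. card Q' = 4 \<and> F \<subseteq> Q'" using fQ by (auto simp: TT_def)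
  have RnotQ: "\<not> U \<subseteq> Q" if "U \<in> ?R" for U using that by (auto simp: TT_def Sk_def)
  have "\<exists>U\<in>?R. \<exists>v\<in>U. v \<in> Q \<and> v \<noteq> x"
  proof (rule ccontr)
    assume na: "\<not> (\<exists>U\<in>?R. \<exists>v\<in>U. v \<in> Q \<and> v \<noteq> x)"
    let ?W = "Nb FF x - (Q - {x})"
    have cW: "card ?W = 2" using cN subN fQ by (simp add: card_Diff_subset)
    have "U = insert x ?W" if U: "U \<in> ?R" for U
    proof -
      have UF: "U \<in> FF" "x \<in> U" "card U = 3" using U by (auto simp: Sk_def)
      have fU: "finite U" using UF finF by auto
      have "U - {x} \<subseteq> ?W" using in_Nb[OF UF(1,2)] na U by blast
      moreover have "card (U - {x}) = 2" using UF fU by simp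
      ultimately have "U - {x} = ?W" using cW card_subset_eq[of ?W "U - {x}"] fin_Nb by simp
      thus ?thesis using UF by auto
    qed
    hence "?R \<subseteq> {insert x ?W}" by blast
    hence "card ?R \<le> card {insert x ?W}" by (rule card_mono[rotated]) simp
    hence "card ?R \<le> 1" by simp
    thus False using cR by simp
  qed
  then obtain U v where Uv: "U \<in> ?R" "v \<in> U" "v \<in> Q" "v \<noteq> x" by blast
  have UF: "U \<in> FF" "x \<in> U" "card U = 3" "U \<in> Sk FF x 3" using Uv by (auto simp: Sk_def)
  have fU: "finite U" using UF finF by auto
  have "card (U - {x} - {v}) = 1" using UF fU Uv by simp
  then obtain w where w: "U - {x} - {v} = {w}" using card_1_singletonE by blast
  have Ueq: "U = {x,v,w}" using w UF Uv by auto
  have wx: "w \<noteq> x" "w \<noteq> v" using w by auto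
  have wQ: "w \<notin> Q" using RnotQ[OF Uv(1)] Ueq Uv fQ by auto
  have nmv: "\<not> mini_weight FF v"
  proof
    assume mw: "mini_weight FF v"
    have "U \<subseteq> Q" using M2(1)[OF mw Uv(4) only_one[OF Q Uv(3)] UF(4) Uv(2)] .
    thus False using RnotQ[OF Uv(1)] by simp
  qed
  have "(\<Sum>Q\<in>Sk FF x 4. 1/4 - eps_Q FF x Q) = 1/4 - eps_Q FF x Q" using Q by simp
  thus "(\<Sum>Q\<in>Sk FF x 4. 1/4 - eps_Q FF x Q) \<ge> 11/60" using Pterm(2)[OF nm Qin Uv(3) Uv(4) nmv] by simp
  have nc: "\<not> (\<exists>Q'\<in>FF. card Q' = 4 \<and> {x,v,w} \<subseteq> Q')"
  proof
    assume "\<exists>Q'\<in>FF. card Q' = 4 \<and> {x,v,w} \<subseteq> Q'"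
    then obtain Q' where "Q' \<in> FF" "card Q' = 4" "{x,v,w} \<subseteq> Q'" by blast
    hence "Q' \<in> Sk FF x 4" by (auto simp: Sk_def)
    hence "Q' = Q" using Q by auto
    thus False using \<open>{x,v,w} \<subseteq> Q'\<close> wQ by auto
  qed
  have xv: "{x,v} \<in> FF" using herI[OF fQ(4)] Uv fQ by auto
  have "card {F\<in>Sk FF x 3. v\<in>F} \<ge> 3"
  proof -
    let ?I = "(\<lambda>y. Q - {y}) ` (Q - {x,v})"
    have "insert U ?I \<subseteq> {F\<in>Sk FF x 3. v\<in>F}" using TT_cont(1)[OF Qin Uv(3,4)] UF Uv by auto
    moreover have "U \<notin> ?I" using TT_cont(3)[OF Qin Uv(3,4)] Uv(1) by auto
    hence "card (insert U ?I) = 3" using TT_cont(2)[OF Qin Uv(3,4)] by (simp add: fQ)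
    moreover have "card (insert U ?I) \<le> card {F\<in>Sk FF x 3. v\<in>F}"
      by (rule card_mono[OF _ \<open>insert U ?I \<subseteq> _\<close>]) (simp add: fin_Sk)
    ultimately show ?thesis by simp
  qed
  hence sdv: "set_deg FF {x,v} > 4"
    using SD_low[OF Uv(4)[symmetric] xv] only_one[OF Q Uv(3)] by simp
  have "{F\<in>Sk FF x 3. w\<in>F} \<subseteq> ?R" using wQ by (auto simp: TT_def)
  hence "card {F\<in>Sk FF x 3. w\<in>F} \<le> 2" using cR card_mono[OF fR, of "{F\<in>Sk FF x 3. w\<in>F}"] by simp
  hence sdw: "set_deg FF {x,w} \<le> 4" using SD_up[of x w] wx wQ Q by auto
  have U7: "omega FF x U = 7/20" unfolding Ueq
    using W_mixed[OF Uv(4)[symmetric] wx(1)[symmetric] wx(2)[symmetric] nc sdv sdw] .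
  have "(\<Sum>F\<in>Sk FF x 3. omega FF x F) \<ge> real (card ?C) / 3 + 7/20 * real (card {U})
            + 3/10 * (real (card (Sk FF x 3)) - real (card ?C) - real (card {U}))"
    by (rule SIG3[OF CS Cc]) (use Uv U7 in auto)
  thus "(\<Sum>F\<in>Sk FF x 3. omega FF x F) \<ge> 33/20" using cC c3 by simp
qed


lemma spec552:
  assumes nm: "\<not> mini_weight FF x" and c3: "card (Sk FF x 3) = 5"
    and c4: "card (Sk FF x 4) = 2"
  shows "(\<Sum>F\<in>Sk FF x 3. omega FF x F) \<ge> 5/3" and "(\<Sum>Q\<in>Sk FF x 4. 1/4 - eps_Q FF x Q) \<ge> 14/60"
proof -
  obtain Q1 Q2 where Q: "Sk FF x 4 = {Q1,Q2}" "Q1 \<noteq> Q2" using c4 unfolding card_2_iff by blast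
  have Qin: "Q1 \<in> Sk FF x 4" "Q2 \<in> Sk FF x 4" using Q by auto
  have fQ: "finite Q1" "card Q1 = 4" "x \<in> Q1" "Q1 \<in> FF" using Qin finF by (auto simp: Sk_def)
  let ?C = "TT x Q1 \<union> TT x Q2"
  have fT: "finite (TT x Q1)" "finite (TT x Q2)" using finTT Qin by (auto simp: Sk_def)
  have CS: "?C \<subseteq> Sk FF x 3" using TT_sub Qin by blast
  have c5: "card ?C \<ge> 5" using two_Q[OF Qin Q(2)] .
  have "card ?C \<le> 5" using card_mono[OF fin_Sk CS] c3 by simp
  hence cC: "card ?C = 5" using c5 by simp
  have Cc: "\<forall>F\<in>?C. \<exists>Q'\<in>FF. card Q' = 4 \<and> F \<subseteq> Q'" using Qin by (auto simp: TT_def Sk_def)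
  have "(\<Sum>F\<in>Sk FF x 3. omega FF x F) \<ge> real (card ?C) / 3 + 7/20 * real (card ({}::'a set set))
            + 3/10 * (real (card (Sk FF x 3)) - real (card ?C) - real (card ({}::'a set set)))"
    by (rule SIG3[OF CS Cc]) auto
  thus "(\<Sum>F\<in>Sk FF x 3. omega FF x F) \<ge> 5/3" using cC c3 by simp
  have "card (TT x Q1 \<inter> TT x Q2) = 1"
    using card_Un_Int[OF fT] cC TT_card Qin by simp
  then obtain G where G: "G \<in> TT x Q1" "G \<in> TT x Q2" using card_1_singletonE by blast
  hence Gp: "G \<subseteq> Q1" "G \<subseteq> Q2" "x \<in> G" "card G = 3" by (auto simp: TT_def)
  have "finite G" using Gp(1) fQ(1) finite_subset by blast
  hence "card (G - {x}) = 2" using Gp by simp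
  hence "G - {x} \<noteq> {}" by (metis card.empty zero_neq_numeral)
  then obtain a where a: "a \<in> G" "a \<noteq> x" by blast
  obtain c where c: "c \<in> Q1" "c \<notin> Q2" "c \<noteq> x" using diff_elem[OF Qin Q(2)] by blast
  have cq: "cQ FF Q1 \<le> 2"
  proof (rule ccontr)
    assume "\<not> cQ FF Q1 \<le> 2"
    hence c3': "card {y\<in>Q1. mini_weight FF y} \<ge> 3" by (simp add: cQ_def)
    have s: "{y\<in>Q1. mini_weight FF y} \<subseteq> Q1 - {x}" using nm by auto
    have "card (Q1 - {x}) = 3" using fQ by simp
    moreover have "card {y\<in>Q1. mini_weight FF y} \<le> card (Q1 - {x})" using card_mono[OF _ s] fQ by simp
    ultimately have "card {y\<in>Q1. mini_weight FF y} = card (Q1 - {x})" using c3' by linarith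
    hence "{y\<in>Q1. mini_weight FF y} = Q1 - {x}"
      using card_subset_eq[OF _ s] fQ by simp
    hence mc: "mini_weight FF c" and ma: "mini_weight FF a" using a c Gp by auto
    obtain R2 where R2: "R2 \<in> Sk FF c 4" "R2 \<noteq> Q1" "x \<notin> R2" "Sk FF c 3 = TT c Q1 \<union> TT c R2" "Q1 - {x} \<subseteq> R2"
      by (rule tip_struct[OF mc c(3) only_one2[OF Q(1) c(1) c(2)]])
    have "{Q1,Q2,R2} \<subseteq> Sk FF a 4" using R2 a Gp Qin by (auto simp: Sk_def)
    hence "card {Q1,Q2,R2} \<le> card (Sk FF a 4)" by (rule card_mono[OF fin_Sk])
    moreover have "R2 \<noteq> Q2" using R2(3) Qin by (auto simp: Sk_def)
    ultimately have "card (Sk FF a 4) \<ge> 3" using Q(2) R2(2) by simp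
    thus False using mini_cards(3)[OF ma] by simp
  qed
  have "1/4 - eps_Q FF x Q1 \<ge> 11/60" using eps_nonmini(3)[OF nm fQ(3) fQ(1) fQ(2) cq] by simp
  moreover have "(\<Sum>Q\<in>Sk FF x 4. 1/4 - eps_Q FF x Q) = (1/4 - eps_Q FF x Q1) + (1/4 - eps_Q FF x Q2)"
    using Q by simp
  ultimately show "(\<Sum>Q\<in>Sk FF x 4. 1/4 - eps_Q FF x Q) \<ge> 14/60" using Pterm(1)[OF nm Qin(2)] by linarith
qed


lemma mini_case:
  assumes mw: "mini_weight FF x"
  shows "weight FF x = 31/6" and "eps FF x = -2/15"
proof -
  have c2: "card (Sk FF x 2) = 4" and c3: "card (Sk FF x 3) = 5" and c4: "card (Sk FF x 4) = 2"
    using mini_cards[OF mw] by auto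
  obtain Q1 Q2 where Q: "Sk FF x 4 = {Q1,Q2}" "Q1 \<noteq> Q2" using c4 unfolding card_2_iff by blast
  have Qin: "Q1 \<in> Sk FF x 4" "Q2 \<in> Sk FF x 4" using Q by auto
  have sx: "{x} \<in> FF" using Qin single_in by (auto simp: Sk_def)
  have big: "Sbig FF x = {}" using big_Q c4 by fastforce
  let ?C = "TT x Q1 \<union> TT x Q2"
  have CS: "?C \<subseteq> Sk FF x 3" using TT_sub Qin by blast
  have "card ?C \<ge> 5" using two_Q[OF Qin Q(2)] .
  moreover have "card ?C \<le> card (Sk FF x 3)" by (rule card_mono[OF fin_Sk CS])
  ultimately have "card ?C = card (Sk FF x 3)" using c3 by simp
  hence S3: "Sk FF x 3 = ?C" using card_subset_eq[OF fin_Sk CS] by simp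
  have "(\<Sum>F\<in>Sk FF x 3. omega FF x F) = (\<Sum>F\<in>Sk FF x 3. 1/3)"
  proof (rule sum.cong)
    fix F assume F: "F \<in> Sk FF x 3"
    hence "F \<in> ?C" using S3 by simp
    then obtain Q where "Q \<in> {Q1,Q2}" "F \<subseteq> Q" by (auto simp: TT_def)
    moreover have "card F = 3" using F by (simp add: Sk_def)
    ultimately show "omega FF x F = 1/3" using W_cov Qin by (auto simp: Sk_def)
  qed simp
  hence s3: "(\<Sum>F\<in>Sk FF x 3. omega FF x F) = 5/3" using c3 by simp
  show "weight FF x = 31/6" using decomp(1)[OF sx] c2 c4 s3 big by simp
  have "(\<Sum>Q\<in>Sk FF x 4. eps_Q FF x Q) = (\<Sum>Q\<in>Sk FF x 4. -1/15)"
    by (rule sum.cong) (simp_all add: eps_mini[OF mw])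
  thus "eps FF x = -2/15" using decomp(2)[OF sx] c4 by simp
qed


lemma two_elems:
  assumes "card S \<ge> 2"
  obtains a b where "a \<in> S" "b \<in> S" "a \<noteq> b"
proof -
  obtain T where "T \<subseteq> S" "card T = 2" using obtain_subset_with_card_n[OF assms] by blast
  thus ?thesis using that unfolding card_2_iff by blast
qed

lemma nonmini:
  assumes d12: "deg FF x \<ge> 12" and nm: "\<not> mini_weight FF x"
  shows "weight FF x - eps FF x > 53/10 \<or> (eps FF x = 0 \<and> weight FF x \<ge> 53/10 \<and>
     ((f_i FF 1 x = 5 \<and> f_i FF 2 x = 6 \<and> f_i FF 3 x = 0) \<or> (f_i FF 1 x = 4 \<and> f_i FF 2 x = 6 \<and> f_i FF 3 x = 1)))"
proof -
  have "card {F\<in>FF. x\<in>F} \<ge> 12" using d12 deg_eq by simp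
  hence "{F\<in>FF. x\<in>F} \<noteq> {}" by (metis card.empty not_numeral_le_zero)
  then obtain F0 where "F0 \<in> FF" "x \<in> F0" by auto
  hence sx: "{x} \<in> FF" by (rule single_in)
  define n where "n = card (Sk FF x 2)"
  define m where "m = card (Sk FF x 3)"
  define t where "t = card (Sk FF x 4)"
  define r where "r = card (Sbig FF x)"
  define S3s where "S3s = (\<Sum>F\<in>Sk FF x 3. omega FF x F)"
  define P where "P = (\<Sum>Q\<in>Sk FF x 4. 1/4 - eps_Q FF x Q)"
  define Sb where "Sb = (\<Sum>F\<in>Sbig FF x. omega FF x F)"
  have U: "weight FF x - eps FF x = 1 + real n / 2 + S3s + P + Sb"
    using key_expr[OF sx] by (simp add: n_def S3s_def P_def Sb_def)
  have W: "weight FF x = 1 + real n / 2 + S3s + real t / 4 + Sb"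
    using decomp(1)[OF sx] by (simp add: n_def S3s_def t_def Sb_def)
  have E: "eps FF x = (\<Sum>Q\<in>Sk FF x 4. eps_Q FF x Q)" using decomp(2)[OF sx] .
  have Sb0: "Sb \<ge> 0" using decomp(4)[OF sx] by (simp add: Sb_def)
  have Pt: "P \<ge> real t / 20" using Psub(2)[OF nm, of "{}"] by (simp add: P_def t_def)
  have dd: "1 + n + m + t + r \<ge> 12" using decomp(3)[OF sx] d12 by (simp add: n_def m_def t_def r_def)
  have fi: "f_i FF 1 x = n" "f_i FF 2 x = m" "f_i FF 3 x = t"
    using f_i_eq[of 1 x] f_i_eq[of 2 x] f_i_eq[of 3 x] by (simp_all add: n_def m_def t_def numeral_eq_Suc)
  have f1: "m \<ge> 3 \<and> S3s \<ge> 3/10 * real m + 1/10" if tt: "t \<ge> 1"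
  proof -
    have "Sk FF x 4 \<noteq> {}" using tt t_def by auto
    then obtain Q where Q: "Q \<in> Sk FF x 4" by blast
    have CS: "TT x Q \<subseteq> Sk FF x 3" using TT_sub[OF Q] .
    have "card (TT x Q) \<le> m" using card_mono[OF fin_Sk CS] by (simp add: m_def)
    hence m3: "m \<ge> 3" using TT_card[OF Q] by simp
    have Cc: "\<forall>F\<in>TT x Q. \<exists>Q'\<in>FF. card Q' = 4 \<and> F \<subseteq> Q'" using Q by (auto simp: TT_def Sk_def)
    have "S3s \<ge> real (card (TT x Q)) / 3 + 7/20 * real (card ({}::'a set set))
            + 3/10 * (real (card (Sk FF x 3)) - real (card (TT x Q)) - real (card ({}::'a set set)))"
      unfolding S3s_def by (rule SIG3[OF CS Cc]) auto
    thus ?thesis using m3 TT_card[OF Q] by (simp add: m_def field_simps)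
  qed
  have f2: "m \<ge> 5 \<and> S3s \<ge> 3/10 * real m + 1/6" if tt: "t \<ge> 2"
  proof -
    have "card (Sk FF x 4) \<ge> 2" using tt t_def by simp
    then obtain Q1 Q2 where Q: "Q1 \<in> Sk FF x 4" "Q2 \<in> Sk FF x 4" "Q1 \<noteq> Q2"
      by (rule two_elems)
    let ?C = "TT x Q1 \<union> TT x Q2"
    have CS: "?C \<subseteq> Sk FF x 3" using TT_sub Q by blast
    have c5: "card ?C \<ge> 5" using two_Q[OF Q] .
    have "card ?C \<le> m" using card_mono[OF fin_Sk CS] by (simp add: m_def)
    hence m5: "m \<ge> 5" using c5 by simp
    have Cc: "\<forall>F\<in>?C. \<exists>Q'\<in>FF. card Q' = 4 \<and> F \<subseteq> Q'" using Q by (auto simp: TT_def Sk_def)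
    have "S3s \<ge> real (card ?C) / 3 + 7/20 * real (card ({}::'a set set))
            + 3/10 * (real (card (Sk FF x 3)) - real (card ?C) - real (card ({}::'a set set)))"
      unfolding S3s_def by (rule SIG3[OF CS Cc]) auto
    moreover have "real (card ?C) \<ge> 5" using c5 by simp
    ultimately have "S3s \<ge> 3/10 * real m + 1/6"
      unfolding m_def by (simp add: field_simps)
    thus ?thesis using m5 by simp
  qed
  have f0: "S3s \<ge> 3/10 * real m"
  proof -
    have "S3s \<ge> real (card ({}::'a set set)) / 3 + 7/20 * real (card ({}::'a set set))
            + 3/10 * (real (card (Sk FF x 3)) - real (card ({}::'a set set)) - real (card ({}::'a set set)))"
      unfolding S3s_def by (rule SIG3) auto
    thus ?thesis by (simp add: m_def)
  qed
  have f3: "m \<ge> 6" if tt: "t \<ge> 3"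
  proof -
    have "card (Sk FF x 4) \<ge> 3" using tt t_def by simp
    then obtain Q1 Q2 Q3 where "Q1 \<in> Sk FF x 4" "Q2 \<in> Sk FF x 4" "Q3 \<in> Sk FF x 4"
      "Q1 \<noteq> Q2" "Q1 \<noteq> Q3" "Q2 \<noteq> Q3" by (rule three_elems)
    thus ?thesis using three_Q m_def by blast
  qed
  have fr: "t \<ge> 4" if "r \<ge> 1"
  proof -
    have "Sbig FF x \<noteq> {}" using that r_def by auto
    thus ?thesis using big_Q t_def by blast
  qed
  have mn: "m \<le> n choose 2"
  proof -
    have "m = card {F \<in> Sk FF x 3. F - {x} \<subseteq> Nb FF x}" using S3_all m_def by simp
    also have "\<dots> \<le> card (Nb FF x) choose 2" using S3_bound fin_Nb by blast
    finally show ?thesis using Nb_card n_def by simp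
  qed
  have n4: "n \<ge> 4"
  proof (rule ccontr)
    assume "\<not> n \<ge> 4"
    hence "n \<le> 3" by simp
    hence "n = 0 \<or> n = 1 \<or> n = 2 \<or> n = 3" by auto
    hence "n choose 2 \<le> 3" by (auto simp: choose_two)
    hence "m \<le> 3" using mn by simp
    hence "t \<le> 1" using f2 by force
    hence "r = 0" using fr by force
    thus False using dd \<open>t \<le> 1\<close> \<open>m \<le> 3\<close> \<open>n \<le> 3\<close> by simp
  qed
  have m6: "m \<le> 6" if "n = 4" using mn that by (simp add: choose_two)
  have S4e: "Sk FF x 4 = {}" if "t = 0" using that fin_Sk t_def by simp
  show ?thesis
  proof (cases "t = 0")
    case t0: True
    hence r0: "r = 0" using fr by force
    have eps0: "eps FF x = 0" using E S4e[OF t0] by simp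
    have nm11: "real n + real m \<ge> 11" using dd t0 r0 by simp
    consider "n = 4" | "n = 5" | "n \<ge> 6" using n4 by linarith
    thus ?thesis
    proof cases
      case 1 thus ?thesis using m6 dd t0 r0 by simp
    next
      case 2
      show ?thesis
      proof (cases "m = 6")
        case True
        have "weight FF x \<ge> 53/10" using W f0 Sb0 2 True t0 by simp
        thus ?thesis using eps0 fi 2 True t0 by simp
      next
        case False
        hence "m \<ge> 7" using dd 2 t0 r0 by simp
        hence "real m \<ge> 7" by simp
        thus ?thesis using U f0 Pt Sb0 2 by simp
      qed
    next
      case 3
      hence "real n \<ge> 6" by simp
      thus ?thesis using U f0 Pt Sb0 nm11 by simp
    qed
  next
    case tn0: False
    show ?thesis
    proof (cases "t = 1")
      case t1: True
      hence r0: "r = 0" using fr by force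
      have nm10: "real n + real m \<ge> 10" using dd t1 r0 by simp
      have ff: "m \<ge> 3" "S3s \<ge> 3/10 * real m + 1/10" using f1 t1 by auto
      consider "n = 4" | "n = 5" | "n \<ge> 6" using n4 by linarith
      thus ?thesis
      proof cases
        case 1
        hence m66: "m = 6" using m6 dd t1 r0 by simp
        have "(\<Sum>Q\<in>Sk FF x 4. eps_Q FF x Q) = 0" "S3s \<ge> 41/20"
          using spec461[OF nm] 1 m66 t1 by (auto simp: n_def m_def t_def S3s_def)
        hence "eps FF x = 0" "weight FF x \<ge> 53/10" using E W Sb0 1 t1 by auto
        thus ?thesis using fi 1 m66 t1 by simp
      next
        case 2
        show ?thesis
        proof (cases "m = 5")
          case True
          have "S3s \<ge> 33/20" "P \<ge> 11/60"
            using spec551[OF nm] 2 True t1 by (auto simp: n_def m_def t_def S3s_def P_def)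
          thus ?thesis using U Sb0 2 by simp
        next
          case False
          hence "m \<ge> 6" using nm10 2 by simp
          hence "real m \<ge> 6" by simp
          thus ?thesis using U ff Pt Sb0 2 t1 by simp
        qed
      next
        case 3
        hence "real n \<ge> 6" by simp
        thus ?thesis using U ff Pt Sb0 nm10 t1 by simp
      qed
    next
      case tn1: False
      show ?thesis
      proof (cases "t = 2")
        case t2: True
        hence r0: "r = 0" using fr by force
        have ff: "m \<ge> 5" "S3s \<ge> 3/10 * real m + 1/6" using f2 t2 by auto
        consider "n = 4" | "n = 5" | "n \<ge> 6" using n4 by linarith
        thus ?thesis
        proof cases
          case 1
          show ?thesis
          proof (cases "m = 5")
            case True
            hence "mini_weight FF x" using fi 1 t2 by (simp add: mini_weight_def)
            thus ?thesis using nm by simp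
          next
            case False
            hence m66: "m = 6" using m6 1 ff by simp
            have "P \<ge> 22/60" using spec462[OF nm] 1 m66 t2 by (auto simp: n_def m_def t_def P_def)
            thus ?thesis using U ff Sb0 1 m66 by simp
          qed
        next
          case 2
          show ?thesis
          proof (cases "m = 5")
            case True
            have "S3s \<ge> 5/3" "P \<ge> 14/60"
              using spec552[OF nm] True t2 by (auto simp: m_def t_def S3s_def P_def)
            thus ?thesis using U Sb0 2 by simp
          next
            case False
            hence "real m \<ge> 6" using ff by simp
            thus ?thesis using U ff Pt Sb0 2 t2 by simp
          qed
        next
          case 3
          hence "real n \<ge> 6" by simp
          moreover have "real m \<ge> 5" using ff by simp
          ultimately show ?thesis using U ff Pt Sb0 t2 by simp
        qed
      next
        case tn2: False
        hence t3: "t \<ge> 3" using tn0 tn1 by simp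
        have m6': "real m \<ge> 6" using f3[OF t3] by simp
        have ff: "S3s \<ge> 3/10 * real m + 1/6" using f2 t3 by auto
        have "real t \<ge> 3" using t3 by simp
        hence Pt3: "P \<ge> 3/20" using Pt by linarith
        consider "n = 4" | "n \<ge> 5" using n4 by linarith
        thus ?thesis
        proof cases
          case 1
          have "P \<ge> 33/60" using spec46big[OF nm] 1 t3 by (auto simp: n_def t_def P_def)
          thus ?thesis using U ff Sb0 1 m6' by simp
        next
          case 2
          hence "real n \<ge> 5" by simp
          thus ?thesis using U ff Pt3 Sb0 m6' by simp
        qed
      qed
    qed
  qed
qed


lemma eps_ge0: "\<not> mini_weight FF x \<Longrightarrow> eps FF x \<ge> 0"
  unfolding eps_def by (rule sum_nonneg) (use finF eps_nonmini(1) in auto)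

end

theorem mainTheorem8:
  fixes V :: "'a set" and \<F> :: "'a set set"
  assumes "finite V" and "\<F> \<subseteq> Pow V" and "minimal_family V \<F>"
  shows "\<forall>x \<in> V.
           weight \<F> x \<ge> 53/10 + eps \<F> x
         \<and> (weight \<F> x < 53/10 \<longleftrightarrow> mini_weight \<F> x)
         \<and> (weight \<F> x > 53/10 \<longrightarrow> weight \<F> x > 53/10 + eps \<F> x)
         \<and> (weight \<F> x = 53/10 \<longrightarrow>
              (f_i \<F> 1 x = 5 \<and> f_i \<F> 2 x = 6 \<and> f_i \<F> 3 x = 0) \<or>
              (f_i \<F> 1 x = 4 \<and> f_i \<F> 2 x = 6 \<and> f_i \<F> 3 x = 1))"
proof
  fix x assume xV: "x \<in> V"
  have her: "hereditary \<F>" and md: "min_deg V \<F> \<ge> 12"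
    using assms(3) by (auto simp: minimal_family_def)
  have "min_deg V \<F> \<le> deg \<F> x" unfolding min_deg_def using assms(1) xV by simp
  hence d12: "deg \<F> x \<ge> 12" using md by simp
  show "weight \<F> x \<ge> 53/10 + eps \<F> x
         \<and> (weight \<F> x < 53/10 \<longleftrightarrow> mini_weight \<F> x)
         \<and> (weight \<F> x > 53/10 \<longrightarrow> weight \<F> x > 53/10 + eps \<F> x)
         \<and> (weight \<F> x = 53/10 \<longrightarrow>
              (f_i \<F> 1 x = 5 \<and> f_i \<F> 2 x = 6 \<and> f_i \<F> 3 x = 0) \<or>
              (f_i \<F> 1 x = 4 \<and> f_i \<F> 2 x = 6 \<and> f_i \<F> 3 x = 1))"
  proof (cases "mini_weight \<F> x")
    case True
    have "weight \<F> x = 31/6" "eps \<F> x = -2/15"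
      using mini_case[OF assms(1,2) her True] by auto
    thus ?thesis using True by simp
  next
    case False
    have e0: "eps \<F> x \<ge> 0" using eps_ge0[OF assms(1,2) her False] .
    have "weight \<F> x - eps \<F> x > 53/10 \<or> (eps \<F> x = 0 \<and> weight \<F> x \<ge> 53/10 \<and>
     ((f_i \<F> 1 x = 5 \<and> f_i \<F> 2 x = 6 \<and> f_i \<F> 3 x = 0) \<or> (f_i \<F> 1 x = 4 \<and> f_i \<F> 2 x = 6 \<and> f_i \<F> 3 x = 1)))"
      using nonmini[OF assms(1,2) her d12 False] .
    thus ?thesis
    proof
      assume a: "weight \<F> x - eps \<F> x > 53/10"
      hence "weight \<F> x \<noteq> 53/10" "\<not> weight \<F> x < 53/10" using e0 by linarith+
      thus ?thesis using a False by auto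
    next
      assume "eps \<F> x = 0 \<and> weight \<F> x \<ge> 53/10 \<and>
       ((f_i \<F> 1 x = 5 \<and> f_i \<F> 2 x = 6 \<and> f_i \<F> 3 x = 0) \<or> (f_i \<F> 1 x = 4 \<and> f_i \<F> 2 x = 6 \<and> f_i \<F> 3 x = 1))"
      thus ?thesis using False by auto
    qed
  qed
qed

end
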